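(* Let $W=e^{-q}$ be the bivariate Freud weight and $\{\mathbb{P}_n\}$ an orthonormal polynomial system for it, with matrices $G_n$, $A_{n,i}$, $B_{n,i}$, $C_{n,i}$ as in the context. Then for $i=1,2$: (i) $A_{n,i}=G_nL_{n,i}G_{n+1}^{-1}$ for $n\geqslant0$; (ii) $B_{n,i}=G_nL_{n-1,i}^TN_{n,i}G_{n-1}^{-1}$ for $n\geqslant1$; (iii) $C_{n,i}^T=G_{n-3}L_{n-3,i}L_{n-2,i}L_{n-1,i}K_{n,i}G_n^{-1}$ for $n\geqslant3$. Moreover, the matrix $A_{n,i}^{-1}:=G_{n+1}L_{n,i}^TG_n^{-1}$ is a right (pseudo) inverse of $A_{n,i}$, i.e. $A_{n,i}A_{n,i}^{-1}=I_{n+1}$.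
   Context: Parameters $a_{4,0},a_{2,2},a_{0,4}\geqslant0$, $a_{2,0},a_{0,2}\in\mathbb{R}$, $a_{4,0}+a_{2,2}>0$, $a_{2,2}+a_{0,4}>0$; $q(x,y)=a_{4,0}x^4+a_{2,2}x^2y^2+a_{0,4}y^4+a_{2,0}x^2+a_{0,2}y^2$, $W=e^{-q}$ on $\mathbb{R}^2$, inner product $(f,g)=\iint fgW\,dx\,dy$ (entrywise on vectors). $\mathbb{X}_n=(x^n,x^{n-1}y,\dots,y^n)^T$. An orthonormal polynomial system is a sequence of column vectors $\mathbb{P}_n=(P_{n,0},\dots,P_{n,n})^T$ of linearly independent polynomials of exact total degree $n$ with $(\mathbb{P}_n,\mathbb{P}_m^T)=\delta_{nm}I_{n+1}$. Write $\mathbb{P}_n=\sum_{k=0}^nG^n_k\mathbb{X}_k$, $G_n:=G^n_n$ invertible. $A_{n,i}$ ($(n+1)\times(n+2)$) are defined by $x\mathbb{P}_n=A_{n,1}\mathbb{P}_{n+1}+A_{n-1,1}^T\mathbb{P}_{n-1}$, $y\mathbb{P}_n=A_{n,2}\mathbb{P}_{n+1}+A_{n-1,2}^T\mathbb{P}_{n-1}$ ($\mathbb{P}_{-1}=0$). $B_{n,i}$ ($(n+1)\times n$) and $C_{n,i}$ ($(n+1)\times(n-2)$, zero for $n=1,2$) are the matrices in the structure relations $\partial_x\mathbb{P}_n=B_{n,1}\mathbb{P}_{n-1}+C_{n,1}\mathbb{P}_{n-3}$, $\partial_y\mathbb{P}_n=B_{n,2}\mathbb{P}_{n-1}+C_{n,2}\mathbb{P}_{n-3}$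 ($n\geqslant1$, $\mathbb{P}_{-2}=\mathbb{P}_{-1}=0$), which hold for this weight. $L_{n,1}=(I_{n+1}\,|\,0)$, $L_{n,2}=(0\,|\,I_{n+1})$ ($(n+1)\times(n+2)$). $N_{n,1}=\mathrm{diag}(n,n-1,\dots,1)$, $N_{n,2}=\mathrm{diag}(1,\dots,n)$ ($n\times n$). $K_{n,1}$ is the $(n+1)\times(n+1)$ upper triangular matrix with diagonal entries $4a_{4,0}$, entries $(j,j+2)$ equal to $2a_{2,2}$, others zero; $K_{n,2}$ is the $(n+1)\times(n+1)$ lower triangular matrix with diagonal entries $4a_{0,4}$, entries $(j+2,j)$ equal to $2a_{2,2}$, others zero. *)

theory Defs
  imports "HOL-Analysis.Analysis" "Jordan_Normal_Form.Matrix"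
begin

definition freud_q :: "real \<Rightarrow> real \<Rightarrow> real \<Rightarrow> real \<Rightarrow> real \<Rightarrow> real \<times> real \<Rightarrow> real" where
  "freud_q a40 a22 a04 a20 a02 p =
     (case p of (x, y) \<Rightarrow> a40 * x^4 + a22 * x^2 * y^2 + a04 * y^4 + a20 * x^2 + a02 * y^2)"

definition freud_W :: "real \<Rightarrow> real \<Rightarrow> real \<Rightarrow> real \<Rightarrow> real \<Rightarrow> real \<times> real \<Rightarrow> real" where
  "freud_W a40 a22 a04 a20 a02 p = exp (- freud_q a40 a22 a04 a20 a02 p)"

definition monvec :: "nat \<Rightarrow> real \<times> real \<Rightarrow> real vec" where
  "monvec k p = (case p of (x, y) \<Rightarrow> vec (k + 1) (\<lambda>l. x ^ (k - l) * y ^ l))"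

text \<open>Polynomial system given by its coefficient matrices:
  P_n = sum_{k=0}^n G^n_k X_k, where  Gc n k  is the (n+1) x (k+1) matrix G^n_k.
  polyP Gc n j p is the j-th entry (0-indexed) P_{n,j}(p); polyvec Gc n p is the vector P_n(p).\<close>

definition polyP :: "(nat \<Rightarrow> nat \<Rightarrow> real mat) \<Rightarrow> nat \<Rightarrow> nat \<Rightarrow> real \<times> real \<Rightarrow> real" where
  "polyP Gc n j p = (\<Sum>k\<le>n. (Gc n k *\<^sub>v monvec k p) $ j)"

definition polyvec :: "(nat \<Rightarrow> nat \<Rightarrow> real mat) \<Rightarrow> nat \<Rightarrow> real \<times> real \<Rightarrow> real vec" where
  "polyvec Gc n p = vec (n + 1) (\<lambda>j. polyP Gc n j p)"

text \<open>Orthonormal polynomial system w.r.t. the weight W: G^n_k has size (n+1)x(k+1),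
  G_n = G^n_n is invertible (linear independence, exact total degree n), and
  (P_n, P_m^T) = delta_{nm} I_{n+1}, with all the integrals existing.\<close>

definition orthonormal_system :: "(real \<times> real \<Rightarrow> real) \<Rightarrow> (nat \<Rightarrow> nat \<Rightarrow> real mat) \<Rightarrow> bool" where
  "orthonormal_system W Gc \<longleftrightarrow>
     (\<forall>n k. k \<le> n \<longrightarrow> Gc n k \<in> carrier_mat (n + 1) (k + 1)) \<and>
     (\<forall>n. invertible_mat (Gc n n)) \<and>
     (\<forall>n m j l. j \<le> n \<longrightarrow> l \<le> m \<longrightarrow>
        has_bochner_integral lborel (\<lambda>p. polyP Gc n j p * polyP Gc m l p * W p)
          (if n = m \<and> j = l then 1 else 0))"

definition minv :: "real mat \<Rightarrow> real mat" where
  "minv A = (SOME B. B \<in> carrier_mat (dim_row A) (dim_row A) \<and> inverts_mat A B \<and> inverts_mat B A)"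

definition coord :: "nat \<Rightarrow> real \<times> real \<Rightarrow> real" where
  "coord i p = (if i = 1 then fst p else snd p)"

definition partial :: "nat \<Rightarrow> (real \<times> real \<Rightarrow> real) \<Rightarrow> real \<times> real \<Rightarrow> real" where
  "partial i f p = (case p of (x, y) \<Rightarrow>
     (if i = 1 then deriv (\<lambda>t. f (t, y)) x else deriv (\<lambda>t. f (x, t)) y))"

definition Lmat :: "nat \<Rightarrow> nat \<Rightarrow> real mat" where
  "Lmat i n = mat (n + 1) (n + 2) (\<lambda>(r, c). if (if i = 1 then c = r else c = r + 1) then 1 else 0)"

definition Nmat :: "nat \<Rightarrow> nat \<Rightarrow> real mat" where
  "Nmat i n = mat n n (\<lambda>(r, c). if r = c then (if i = 1 then real (n - r) else real (r + 1)) else 0)"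

definition Kmat :: "real \<Rightarrow> real \<Rightarrow> real \<Rightarrow> nat \<Rightarrow> nat \<Rightarrow> real mat" where
  "Kmat a40 a22 a04 i n = mat (n + 1) (n + 1) (\<lambda>(r, c).
     if i = 1 then (if c = r then 4 * a40 else if c = r + 2 then 2 * a22 else 0)
     else (if c = r then 4 * a04 else if r = c + 2 then 2 * a22 else 0))"

end

theory Submission
  imports Defs
begin


locale frs =
  fixes a40 a22 a04 a20 a02 :: real
    and Gc :: "nat \<Rightarrow> nat \<Rightarrow> real mat"
    and A B :: "nat \<Rightarrow> nat \<Rightarrow> real mat"
    and C :: "nat \<Rightarrow> nat \<Rightarrow> real mat"
  assumes ons: "orthonormal_system (freud_W a40 a22 a04 a20 a02) Gc"
    and A_dim: "\<And>i n. i \<in> {1, 2} \<Longrightarrow> A i n \<in> carrier_mat (n + 1) (n + 2)"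
    and A_rec: "\<And>i n p. i \<in> {1, 2} \<Longrightarrow>
        vec (n + 1) (\<lambda>j. coord i p * polyP Gc n j p) =
        A i n *\<^sub>v polyvec Gc (n + 1) p +
        (if n = 0 then 0\<^sub>v (n + 1) else transpose_mat (A i (n - 1)) *\<^sub>v polyvec Gc (n - 1) p)"
    and B_dim: "\<And>i n. i \<in> {1, 2} \<Longrightarrow> n \<ge> 1 \<Longrightarrow> B i n \<in> carrier_mat (n + 1) n"
    and C_dim: "\<And>i n. i \<in> {1, 2} \<Longrightarrow> n \<ge> 1 \<Longrightarrow> C i n \<in> carrier_mat (n + 1) (n - 2)"
    and BC_rel: "\<And>i n p. i \<in> {1, 2} \<Longrightarrow> n \<ge> 1 \<Longrightarrow>
        vec (n + 1) (\<lambda>j. partial i (polyP Gc n j) p) =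
        B i n *\<^sub>v polyvec Gc (n - 1) p +
        (if n < 3 then 0\<^sub>v (n + 1) else C i n *\<^sub>v polyvec Gc (n - 3) p)"
begin

abbreviation "W \<equiv> freud_W a40 a22 a04 a20 a02"
abbreviation "P \<equiv> polyP Gc"

definition vp :: "nat \<Rightarrow> (nat \<Rightarrow> real) \<Rightarrow> real \<times> real \<Rightarrow> real" where
  "vp M v p = (\<Sum>k\<le>M. v k * P M k p)"

inductive low :: "nat \<Rightarrow> (real \<times> real \<Rightarrow> real) \<Rightarrow> bool" for M where
  low0: "low M (\<lambda>p. 0)"
| lowS: "m < M \<Longrightarrow> k \<le> m \<Longrightarrow> low M f \<Longrightarrow> low M (\<lambda>p. f p + r * P m k p)"

definition top :: "nat \<Rightarrow> (real \<times> real \<Rightarrow> real) \<Rightarrow> (nat \<Rightarrow> real) \<Rightarrow> bool" where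
  "top M f v \<longleftrightarrow> low M (\<lambda>p. f p - vp M v p)"

lemma low_add: assumes "low M f" "low M g" shows "low M (\<lambda>p. f p + g p)"
  using assms(2) proof (induction g rule: low.induct)
  case low0 then show ?case using assms(1) by simp
next
  case (lowS m k g r)
  have "low M (\<lambda>p. (f p + g p) + r * P m k p)" using lowS assms(1) by (intro low.lowS) auto
  then show ?case by (simp add: add.assoc)
qed

lemma low_scale: "low M f \<Longrightarrow> low M (\<lambda>p. c * f p)"
proof (induction f rule: low.induct)
  case low0 then show ?case by (simp add: low.low0)
next
  case (lowS m k g r)
  have "low M (\<lambda>p. c * g p + (c * r) * P m k p)" using lowS by (intro low.lowS) auto
  then show ?case by (simp add: algebra_simps)
qed

lemma low_cong: "low M f \<Longrightarrow> (\<And>p. f p = g p) \<Longrightarrow> low M g"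
proof -
  assume "low M f" "\<And>p. f p = g p"
  then have "f = g" by auto
  with \<open>low M f\<close> show ?thesis by simp
qed

lemma low_diff: "low M f \<Longrightarrow> low M g \<Longrightarrow> low M (\<lambda>p. f p - g p)"
  using low_add[of M f "\<lambda>p. (-1) * g p"] low_scale[of M g "-1"] by simp

lemma low_sum: "finite S \<Longrightarrow> (\<And>s. s \<in> S \<Longrightarrow> low M (f s)) \<Longrightarrow> low M (\<lambda>p. \<Sum>s\<in>S. f s p)"
  by (induction S rule: finite_induct) (auto intro: low0 low_add)

lemma low_P: "m < M \<Longrightarrow> k \<le> m \<Longrightarrow> low M (P m k)"
  using lowS[OF _ _ low0, of m M k 1] by simp

lemma low_mono: "low M f \<Longrightarrow> M \<le> M' \<Longrightarrow> low M' f"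
  by (induction f rule: low.induct) (auto intro: low.intros)

lemma low_vp: "m < M \<Longrightarrow> low M (vp m v)"
  unfolding vp_def by (intro low_sum low_scale low_P) auto

lemma low_top: "top M f v \<Longrightarrow> low (Suc M) f"
  unfolding top_def using low_add[OF low_mono[of M "\<lambda>p. f p - vp M v p" "Suc M"] low_vp[of M "Suc M" v]]
  by simp

lemma top_add: "top M f v \<Longrightarrow> top M g w \<Longrightarrow> top M (\<lambda>p. f p + g p) (\<lambda>k. v k + w k)"
  unfolding top_def vp_def
  by (rule low_cong[OF low_add], assumption, assumption) (simp add: algebra_simps sum.distrib)

lemma top_scale: "top M f v \<Longrightarrow> top M (\<lambda>p. c * f p) (\<lambda>k. c * v k)"
  unfolding top_def vp_def
  by (rule low_cong[OF low_scale], assumption) (simp add: algebra_simps sum_distrib_left)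

lemma top_low: "top M f v \<Longrightarrow> low M g \<Longrightarrow> top M (\<lambda>p. f p + g p) v"
  unfolding top_def
  by (rule low_cong[OF low_add], assumption, assumption) (simp add: algebra_simps)

lemma top_sum: "finite S \<Longrightarrow> (\<And>s. s \<in> S \<Longrightarrow> top M (f s) (v s)) \<Longrightarrow>
   top M (\<lambda>p. \<Sum>s\<in>S. f s p) (\<lambda>k. \<Sum>s\<in>S. v s k)"
proof (induction S rule: finite_induct)
  case empty then show ?case by (simp add: top_def vp_def low0)
next
  case (insert x F)
  then show ?case using top_add[of M "f x" "v x" "\<lambda>p. \<Sum>s\<in>F. f s p" "\<lambda>k. \<Sum>s\<in>F. v s k"] by simp
qed

lemma top_vp: "top M (vp M v) v"
  unfolding top_def by (simp add: low0)

lemma top_cong: "top M f v \<Longrightarrow> (\<And>p. f p = g p) \<Longrightarrow> (\<And>k. k \<le> M \<Longrightarrow> v k = w k) \<Longrightarrow> top M g w"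
  unfolding top_def vp_def by (rule low_cong) auto

lemma top_P: "k \<le> M \<Longrightarrow> top M (P M k) (\<lambda>l. if l = k then 1 else 0)"
proof -
  assume k: "k \<le> M"
  have "\<And>p. (\<Sum>l\<le>M. (if l = k then 1 else 0) * P M l p) = (\<Sum>l\<le>M. if l = k then P M l p else 0)"
    by (rule sum.cong) auto
  then show ?thesis unfolding top_def vp_def using k by (intro low_cong[OF low0]) (simp add: sum.delta)
qed

lemma ons_int: "j \<le> n \<Longrightarrow> l \<le> m \<Longrightarrow>
  has_bochner_integral lborel (\<lambda>p. P n j p * P m l p * W p) (if n = m \<and> j = l then 1 else 0)"
  using ons unfolding orthonormal_system_def by blast

lemma low_int: "low n f \<Longrightarrow> j \<le> n \<Longrightarrow> has_bochner_integral lborel (\<lambda>p. f p * P n j p * W p) 0"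
proof (induction f rule: low.induct)
  case low0 then show ?case by (simp add: has_bochner_integral_zero)
next
  case (lowS m k f r)
  have "has_bochner_integral lborel (\<lambda>p. f p * P n j p * W p + r * (P m k p * P n j p * W p)) (0 + r * 0)"
    using lowS ons_int[of k m j n] by (intro has_bochner_integral_add has_bochner_integral_mult_right) auto
  then show ?case by (simp add: algebra_simps)
qed

lemma vp_int: "j \<le> n \<Longrightarrow> has_bochner_integral lborel (\<lambda>p. vp m v p * P n j p * W p) (if m = n then v j else 0)"
proof -
  assume j: "j \<le> n"
  have "has_bochner_integral lborel (\<lambda>p. \<Sum>k\<le>m. v k * (P m k p * P n j p * W p))
          (\<Sum>k\<le>m. v k * (if m = n \<and> k = j then 1 else 0))"
    using j ons_int by (intro has_bochner_integral_sum has_bochner_integral_mult_right) auto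
  moreover have "(\<Sum>k\<le>m. v k * (if m = n \<and> k = j then 1 else 0)) = (if m = n then v j else 0)"
    using j by (auto simp: if_distrib cong: if_cong)
  moreover have "(\<lambda>p. vp m v p * P n j p * W p) = (\<lambda>p. \<Sum>k\<le>m. v k * (P m k p * P n j p * W p))"
    unfolding vp_def sum_distrib_right by (simp add: mult_ac)
  ultimately show ?thesis by simp
qed

lemma top_int: "top n f v \<Longrightarrow> j \<le> n \<Longrightarrow> has_bochner_integral lborel (\<lambda>p. f p * P n j p * W p) (v j)"
proof -
  assume t: "top n f v" and j: "j \<le> n"
  have "has_bochner_integral lborel (\<lambda>p. (f p - vp n v p) * P n j p * W p + vp n v p * P n j p * W p) (0 + v j)"
    using low_int[OF t[unfolded top_def] j] vp_int[OF j, of n v] by (intro has_bochner_integral_add) auto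
  then show ?thesis by (simp add: algebra_simps)
qed

lemma top_unique: assumes "top n f v" "top n f w" "j \<le> n" shows "v j = w j"
proof -
  have "integral\<^sup>L lborel (\<lambda>p. f p * P n j p * W p) = v j"
    using top_int[OF assms(1,3)] by (rule has_bochner_integral_integral_eq)
  moreover have "integral\<^sup>L lborel (\<lambda>p. f p * P n j p * W p) = w j"
    using top_int[OF assms(2,3)] by (rule has_bochner_integral_integral_eq)
  ultimately show ?thesis by simp
qed

end


lemma minv_props:
  assumes "invertible_mat G" "G \<in> carrier_mat n n"
  shows "minv G \<in> carrier_mat n n" "minv G * G = 1\<^sub>m n" "G * minv G = 1\<^sub>m n"
proof -
  from assms obtain B where B: "inverts_mat G B" "inverts_mat B G"
    unfolding invertible_mat_def by blast
  have e1: "G * B = 1\<^sub>m n" using B(1) assms(2) by (simp add: inverts_mat_def)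
  have e2: "B * G = 1\<^sub>m (dim_row B)" using B(2) by (simp add: inverts_mat_def)
  have d1: "dim_col B = n" using arg_cong[OF e1, of dim_col] by (simp only: index_mult_mat(3) index_one_mat(3))
  have "dim_col G = dim_row B" using arg_cong[OF e2, of dim_col] by (simp only: index_mult_mat(3) index_one_mat(3))
  then have "dim_row B = dim_col G" by (rule sym)
  also have "\<dots> = n" by (rule carrier_matD(2)[OF assms(2)])
  finally have d2: "dim_row B = n" .
  from d1 d2 have Bc: "B \<in> carrier_mat n n" by (intro carrier_matI)
  have dG: "dim_row G = n" by (rule carrier_matD(1)[OF assms(2)])
  have ex: "\<exists>B. B \<in> carrier_mat (dim_row G) (dim_row G) \<and> inverts_mat G B \<and> inverts_mat B G"
    unfolding dG using Bc B by blast
  have M: "minv G \<in> carrier_mat (dim_row G) (dim_row G) \<and> inverts_mat G (minv G) \<and> inverts_mat (minv G) G"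
    unfolding minv_def by (rule someI_ex[OF ex])
  then show "minv G \<in> carrier_mat n n" unfolding dG by blast
  from M have "minv G \<in> carrier_mat n n" unfolding dG by blast
  then have dM: "dim_row (minv G) = n" by (rule carrier_matD(1))
  from M show "minv G * G = 1\<^sub>m n" unfolding inverts_mat_def dM by blast
  from M show "G * minv G = 1\<^sub>m n" unfolding inverts_mat_def dG by blast
qed

context frs begin

lemma Gc_carrier: "k \<le> n \<Longrightarrow> Gc n k \<in> carrier_mat (n + 1) (k + 1)"
  using conjunct1[OF ons[unfolded orthonormal_system_def]] by simp

lemma Gc_inv: "invertible_mat (Gc n n)"
  using conjunct1[OF conjunct2[OF ons[unfolded orthonormal_system_def]]] by simp

lemma Ginv: "minv (Gc n n) \<in> carrier_mat (n+1) (n+1)" "minv (Gc n n) * Gc n n = 1\<^sub>m (n+1)"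
   "Gc n n * minv (Gc n n) = 1\<^sub>m (n+1)"
  using minv_props[OF Gc_inv Gc_carrier[of n n]] by auto

lemma dim_polyvec[simp]: "dim_vec (polyvec Gc n p) = n + 1"
  by (simp add: polyvec_def)

lemma index_polyvec[simp]: "j < n + 1 \<Longrightarrow> polyvec Gc n p $ j = P n j p"
  by (simp add: polyvec_def)

lemma mat_vec_sum: "M \<in> carrier_mat r c \<Longrightarrow> j < r \<Longrightarrow> dim_vec v = c \<Longrightarrow>
   (M *\<^sub>v v) $ j = (\<Sum>k<c. M $$ (j,k) * v $ k)"
  by (auto simp: scalar_prod_def atLeast0LessThan intro!: sum.cong)

lemma Arec_comp:
  assumes i: "i \<in> {1,2}" and k: "k \<le> m"
  shows "coord i p * P m k p = (\<Sum>k'\<le>m+1. A i m $$ (k,k') * P (m+1) k' p)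
     + (if m = 0 then 0 else (\<Sum>k'\<le>m-1. A i (m-1) $$ (k',k) * P (m-1) k' p))"
proof -
  have "vec (m + 1) (\<lambda>j. coord i p * P m j p) $ k = (A i m *\<^sub>v polyvec Gc (m + 1) p +
        (if m = 0 then 0\<^sub>v (m + 1) else transpose_mat (A i (m - 1)) *\<^sub>v polyvec Gc (m - 1) p)) $ k"
    using A_rec[OF i] by simp
  note h0 = this
  have h1: "vec (m + 1) (\<lambda>j. coord i p * P m j p) $ k = coord i p * P m k p" using k by simp
  have h2: "(A i m *\<^sub>v polyvec Gc (m + 1) p) $ k = (\<Sum>k'\<le>m+1. A i m $$ (k,k') * P (m+1) k' p)"
    using A_dim[OF i, of m] k by (subst mat_vec_sum[where r="m+1" and c="m+2"]) (auto simp: lessThan_Suc_atMost[symmetric] intro!: sum.cong)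
  have h3: "m \<noteq> 0 \<Longrightarrow> (transpose_mat (A i (m - 1)) *\<^sub>v polyvec Gc (m - 1) p) $ k = (\<Sum>k'\<le>m-1. A i (m-1) $$ (k',k) * P (m-1) k' p)"
  proof -
    assume m: "m \<noteq> 0"
    have c: "transpose_mat (A i (m - 1)) \<in> carrier_mat (m+1) m" using A_dim[OF i, of "m-1"] m by auto
    show ?thesis using A_dim[OF i, of "m-1"] k m
      by (subst mat_vec_sum[OF c]) (auto simp: lessThan_Suc_atMost[symmetric] intro!: sum.cong)
  qed
  have h4: "m \<noteq> 0 \<Longrightarrow> (A i m *\<^sub>v polyvec Gc (m + 1) p + transpose_mat (A i (m - 1)) *\<^sub>v polyvec Gc (m - 1) p) $ k
     = (A i m *\<^sub>v polyvec Gc (m + 1) p) $ k + (transpose_mat (A i (m - 1)) *\<^sub>v polyvec Gc (m - 1) p) $ k"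
    using A_dim[OF i, of "m-1"] k by (intro index_add_vec) auto
  have h5: "m = 0 \<Longrightarrow> (A i m *\<^sub>v polyvec Gc (m + 1) p + 0\<^sub>v (m + 1)) $ k = (A i m *\<^sub>v polyvec Gc (m + 1) p) $ k"
    using k by simp
  show ?thesis
  proof (cases "m = 0")
    case True
    then show ?thesis using h0 h1 h2 h5 by simp
  next
    case False
    then show ?thesis using h0 h1 h2 h3 h4 by simp
  qed
qed

lemma top_mulP: "i \<in> {1,2} \<Longrightarrow> k \<le> m \<Longrightarrow> top (Suc m) (\<lambda>p. coord i p * P m k p) (\<lambda>k'. A i m $$ (k,k'))"
proof -
  assume i: "i \<in> {1,2}" and k: "k \<le> m"
  have l: "low (Suc m) (\<lambda>p. if m = 0 then 0 else (\<Sum>k'\<le>m-1. A i (m-1) $$ (k',k) * P (m-1) k' p))"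
  proof (cases "m = 0")
    case True then show ?thesis by (simp add: low0)
  next
    case False
    have "low (Suc m) (vp (m-1) (\<lambda>k'. A i (m-1) $$ (k',k)))" using False by (intro low_vp) auto
    then show ?thesis using False by (simp add: vp_def[abs_def])
  qed
  have "top (Suc m) (\<lambda>p. vp (Suc m) (\<lambda>k'. A i m $$ (k,k')) p + (if m = 0 then 0 else (\<Sum>k'\<le>m-1. A i (m-1) $$ (k',k) * P (m-1) k' p))) (\<lambda>k'. A i m $$ (k,k'))"
    by (rule top_low[OF top_vp l])
  then show ?thesis using Arec_comp[OF i k] by (simp add: vp_def)
qed

lemma low_mul: assumes i: "i \<in> {1,2}" shows "low M f \<Longrightarrow> low (Suc M) (\<lambda>p. coord i p * f p)"
proof (induction f rule: low.induct)
  case low0 show ?case using low.low0[of "Suc M"] by (simp only: mult_zero_right)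
next
  case (lowS m k f r)
  have "low (Suc M) (\<lambda>p. coord i p * f p + r * (coord i p * P m k p))"
  proof (rule low_add)
    show "low (Suc M) (\<lambda>p. coord i p * f p)" by (rule lowS.IH)
    have "low (Suc (Suc m)) (\<lambda>p. coord i p * P m k p)" by (rule low_top[OF top_mulP[OF i lowS(2)]])
    then have "low (Suc M) (\<lambda>p. coord i p * P m k p)" by (rule low_mono) (use lowS(1) in simp)
    then show "low (Suc M) (\<lambda>p. r * (coord i p * P m k p))" by (rule low_scale)
  qed
  then show ?case by (simp add: algebra_simps)
qed

lemma top_mul: assumes i: "i \<in> {1,2}" and t: "top M f v"
  shows "top (Suc M) (\<lambda>p. coord i p * f p) (\<lambda>k'. \<Sum>k\<le>M. v k * A i M $$ (k,k'))"
proof -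
  have a: "top (Suc M) (\<lambda>p. \<Sum>k\<le>M. v k * (coord i p * P M k p)) (\<lambda>k'. \<Sum>k\<le>M. v k * A i M $$ (k,k'))"
    using top_mulP[OF i] by (intro top_sum top_scale) auto
  have b: "low (Suc M) (\<lambda>p. coord i p * (f p - vp M v p))"
    using low_mul[OF i t[unfolded top_def]] .
  have e: "(\<Sum>k\<le>M. v k * (coord i p * P M k p)) + coord i p * (f p - vp M v p) = coord i p * f p" for p
  proof -
    have "(\<Sum>k\<le>M. v k * (coord i p * P M k p)) = coord i p * vp M v p"
      unfolding vp_def sum_distrib_left by (simp add: mult_ac)
    then show ?thesis by (simp add: right_diff_distrib)
  qed
  have c: "top (Suc M) (\<lambda>p. (\<Sum>k\<le>M. v k * (coord i p * P M k p)) + coord i p * (f p - vp M v p)) (\<lambda>k'. \<Sum>k\<le>M. v k * A i M $$ (k,k'))"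
    by (rule top_low[OF a b])
  show ?thesis by (rule top_cong[OF c]) (simp_all only: e)
qed

end


lemma mat_mult_entry: assumes "X \<in> carrier_mat r n" "Y \<in> carrier_mat n c" "i < r" "j < c"
  shows "(X * Y) $$ (i,j) = (\<Sum>k<n. X $$ (i,k) * Y $$ (k,j))"
proof -
  have d: "dim_row X = r" "dim_col X = n" "dim_row Y = n" "dim_col Y = c" using assms(1,2) by auto
  have "(X * Y) $$ (i,j) = row X i \<bullet> col Y j" using assms(3,4) d by (simp only: index_mult_mat(1))
  also have "\<dots> = (\<Sum>k\<in>{0..<n}. row X i $ k * col Y j $ k)"
    unfolding scalar_prod_def by (simp only: dim_col d)
  also have "\<dots> = (\<Sum>k<n. X $$ (i,k) * Y $$ (k,j))"
    unfolding atLeast0LessThan using assms(3,4) d by (intro sum.cong refl) simp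
  finally show ?thesis .
qed

definition sh :: "nat \<Rightarrow> nat \<Rightarrow> nat" where "sh i l = (if i = 1 then l else l + 1)"

lemma Lmat_carrier: "Lmat i n \<in> carrier_mat (n+1) (n+2)"
  unfolding Lmat_def by (rule mat_carrier)

lemma Lmat_entry: "b < n + 1 \<Longrightarrow> a < n + 2 \<Longrightarrow> Lmat i n $$ (b,a) = (if sh i b = a then 1 else 0)"
  unfolding Lmat_def sh_def by (simp only: index_mat(1)) auto

lemma Lmat_mult: assumes "Y \<in> carrier_mat (n+2) c" "b \<le> n" "k < c"
  shows "(Lmat i n * Y) $$ (b,k) = Y $$ (sh i b, k)"
proof -
  have "(Lmat i n * Y) $$ (b,k) = (\<Sum>a<n+2. Lmat i n $$ (b,a) * Y $$ (a,k))"
    using assms by (intro mat_mult_entry[OF Lmat_carrier]) auto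
  also have "\<dots> = (\<Sum>a<n+2. if sh i b = a then Y $$ (a,k) else 0)"
    using assms(2) by (intro sum.cong refl) (simp add: Lmat_entry)
  also have "\<dots> = Y $$ (sh i b, k)" using assms(2) by (simp add: sh_def)
  finally show ?thesis .
qed

definition mon :: "nat \<Rightarrow> nat \<Rightarrow> real \<times> real \<Rightarrow> real" where
  "mon m l p = fst p ^ (m - l) * snd p ^ l"

lemma coord_mon: "i \<in> {1,2} \<Longrightarrow> l \<le> n \<Longrightarrow> coord i p * mon n l p = mon (Suc n) (sh i l) p"
proof -
  assume i: "i \<in> {1,2}" and l: "l \<le> n"
  have s: "Suc n - l = Suc (n - l)" using l by simp
  show ?thesis
  proof (cases "i = 1")
    case True then show ?thesis by (simp add: coord_def mon_def sh_def s)
  next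
    case False then have "i = 2" using i by simp
    then show ?thesis unfolding coord_def mon_def sh_def by simp
  qed
qed

context frs begin

lemma polyP_exp: assumes j: "j \<le> m" shows "P m j p = (\<Sum>k\<le>m. \<Sum>l\<le>k. Gc m k $$ (j,l) * mon k l p)"
  unfolding polyP_def
proof (intro sum.cong refl)
  fix k assume k: "k \<in> {..m}"
  have dm: "dim_vec (monvec k p) = k + 1" by (simp add: monvec_def split: prod.splits)
  have "(Gc m k *\<^sub>v monvec k p) $ j = (\<Sum>l<k+1. Gc m k $$ (j,l) * monvec k p $ l)"
    using Gc_carrier[of k m] j k dm by (intro mat_vec_sum) auto
  also have "\<dots> = (\<Sum>l\<le>k. Gc m k $$ (j,l) * mon k l p)"
    unfolding lessThan_Suc_atMost[symmetric] Suc_eq_plus1[symmetric]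
    by (intro sum.cong refl) (simp add: monvec_def mon_def split: prod.splits)
  finally show "(Gc m k *\<^sub>v monvec k p) $ j = (\<Sum>l\<le>k. Gc m k $$ (j,l) * mon k l p)" .
qed

lemma P_split_aux:
  assumes IH: "\<And>k l. k < m \<Longrightarrow> l \<le> k \<Longrightarrow> low (Suc k) (mon k l)" and j: "j \<le> m"
  shows "\<exists>R. low m R \<and> (\<forall>p. P m j p = (\<Sum>l\<le>m. Gc m m $$ (j,l) * mon m l p) + R p)"
proof (intro exI conjI allI)
  let ?R = "\<lambda>p. \<Sum>k<m. \<Sum>l\<le>k. Gc m k $$ (j,l) * mon k l p"
  show "low m ?R"
  proof (rule low_sum)
    fix k assume k: "k \<in> {..<m}"
    show "low m (\<lambda>p. \<Sum>l\<le>k. Gc m k $$ (j,l) * mon k l p)"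
    proof (rule low_sum)
      fix l assume l: "l \<in> {..k}"
      have "low (Suc k) (mon k l)" using IH k l by simp
      then have "low m (mon k l)" by (rule low_mono) (use k in simp)
      then show "low m (\<lambda>p. Gc m k $$ (j,l) * mon k l p)" by (rule low_scale)
    qed simp
  qed simp
  fix p
  show "P m j p = (\<Sum>l\<le>m. Gc m m $$ (j,l) * mon m l p) + ?R p"
    unfolding polyP_exp[OF j] lessThan_Suc_atMost[symmetric] sum.lessThan_Suc by simp
qed

lemma HG: assumes a: "l \<le> m" "l' \<le> m"
  shows "(\<Sum>j\<le>m. minv (Gc m m) $$ (l,j) * Gc m m $$ (j,l')) = (if l = l' then 1 else 0)"
proof -
  have "(minv (Gc m m) * Gc m m) $$ (l,l') = (\<Sum>j<m+1. minv (Gc m m) $$ (l,j) * Gc m m $$ (j,l'))"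
    using a by (intro mat_mult_entry[OF Ginv(1) Gc_carrier]) auto
  moreover have "(minv (Gc m m) * Gc m m) $$ (l,l') = (if l = l' then 1 else 0)"
    unfolding Ginv(2) using a by (intro index_one_mat(1)) auto
  ultimately show ?thesis by (simp add: lessThan_Suc_atMost)
qed

lemma GH: assumes a: "l \<le> m" "l' \<le> m"
  shows "(\<Sum>j\<le>m. Gc m m $$ (l,j) * minv (Gc m m) $$ (j,l')) = (if l = l' then 1 else 0)"
proof -
  have "(Gc m m * minv (Gc m m)) $$ (l,l') = (\<Sum>j<m+1. Gc m m $$ (l,j) * minv (Gc m m) $$ (j,l'))"
    using a by (intro mat_mult_entry[OF Gc_carrier Ginv(1)]) auto
  moreover have "(Gc m m * minv (Gc m m)) $$ (l,l') = (if l = l' then 1 else 0)"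
    unfolding Ginv(3) using a by (intro index_one_mat(1)) auto
  ultimately show ?thesis by (simp add: lessThan_Suc_atMost)
qed

lemma mon_top: "l \<le> m \<Longrightarrow> top m (mon m l) (\<lambda>k. minv (Gc m m) $$ (l,k))"
proof (induction m arbitrary: l rule: less_induct)
  case (less m)
  let ?H = "minv (Gc m m)" and ?G = "Gc m m"
  have IH: "\<And>k l. k < m \<Longrightarrow> l \<le> k \<Longrightarrow> low (Suc k) (mon k l)"
    by (rule low_top[OF less.IH])
  have "\<forall>j. \<exists>R. j \<le> m \<longrightarrow> low m R \<and> (\<forall>p. P m j p = (\<Sum>l\<le>m. ?G $$ (j,l) * mon m l p) + R p)"
    using P_split_aux[OF IH] by blast
  from choice[OF this] obtain R where R0: "\<forall>j. j \<le> m \<longrightarrow> low m (R j) \<and>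
      (\<forall>p. P m j p = (\<Sum>l\<le>m. ?G $$ (j,l) * mon m l p) + R j p)"
    by blast
  have R1: "\<And>j. j \<le> m \<Longrightarrow> low m (R j)" using R0 by blast
  have R2: "\<And>j p. j \<le> m \<Longrightarrow> P m j p = (\<Sum>l\<le>m. ?G $$ (j,l) * mon m l p) + R j p" using R0 by blast
  have key: "vp m (\<lambda>j. ?H $$ (l,j)) p = mon m l p + (\<Sum>j\<le>m. ?H $$ (l,j) * R j p)" for p
  proof -
    have "vp m (\<lambda>j. ?H $$ (l,j)) p = (\<Sum>j\<le>m. ?H $$ (l,j) * ((\<Sum>l'\<le>m. ?G $$ (j,l') * mon m l' p) + R j p))"
      unfolding vp_def using R2 by (intro sum.cong refl) simp
    also have "\<dots> = (\<Sum>j\<le>m. \<Sum>l'\<le>m. ?H $$ (l,j) * ?G $$ (j,l') * mon m l' p) + (\<Sum>j\<le>m. ?H $$ (l,j) * R j p)"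
      unfolding distrib_left sum.distrib sum_distrib_left by (simp only: mult.assoc)
    also have "(\<Sum>j\<le>m. \<Sum>l'\<le>m. ?H $$ (l,j) * ?G $$ (j,l') * mon m l' p) = (\<Sum>l'\<le>m. (\<Sum>j\<le>m. ?H $$ (l,j) * ?G $$ (j,l')) * mon m l' p)"
      by (subst sum.swap) (simp only: sum_distrib_right)
    also have "\<dots> = (\<Sum>l'\<le>m. if l = l' then mon m l' p else 0)"
      using less.prems by (intro sum.cong refl) (simp add: HG)
    also have "\<dots> = mon m l p" using less.prems by simp
    finally show ?thesis .
  qed
  have ls: "low m (\<lambda>p. \<Sum>j\<le>m. ?H $$ (l,j) * R j p)"
  proof (rule low_sum)
    fix j assume "j \<in> {..m}"
    then show "low m (\<lambda>p. ?H $$ (l,j) * R j p)" using R1 by (intro low_scale) simp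
  qed simp
  have lowS: "low m (\<lambda>p. - (\<Sum>j\<le>m. ?H $$ (l,j) * R j p))"
    using low_scale[OF ls, of "-1"] by simp
  have "top m (\<lambda>p. vp m (\<lambda>j. ?H $$ (l,j)) p + - (\<Sum>j\<le>m. ?H $$ (l,j) * R j p)) (\<lambda>k. ?H $$ (l,k))"
    by (rule top_low[OF top_vp lowS])
  then show ?case by (rule top_cong) (simp_all add: key)
qed

lemma mon_low: "l \<le> m \<Longrightarrow> low (Suc m) (mon m l)"
  by (rule low_top[OF mon_top])

lemma P_split: "j \<le> m \<Longrightarrow> \<exists>R. low m R \<and> (\<forall>p. P m j p = (\<Sum>l\<le>m. Gc m m $$ (j,l) * mon m l p) + R p)"
  by (rule P_split_aux[OF mon_low])

lemma A_entry:
  assumes i: "i \<in> {1,2}" and j: "j \<le> n" and k: "k \<le> n + 1"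
  shows "A i n $$ (j,k) = (\<Sum>l\<le>n. Gc n n $$ (j,l) * minv (Gc (n+1) (n+1)) $$ (sh i l, k))"
proof -
  obtain R where R: "low n R" "\<forall>p. P n j p = (\<Sum>l\<le>n. Gc n n $$ (j,l) * mon n l p) + R p"
    using P_split[OF j] by blast
  have t1: "top (Suc n) (\<lambda>p. coord i p * P n j p) (\<lambda>k. A i n $$ (j,k))"
    using top_mulP[OF i j] .
  have ts: "top (Suc n) (\<lambda>p. \<Sum>l\<le>n. Gc n n $$ (j,l) * mon (Suc n) (sh i l) p)
     (\<lambda>k. \<Sum>l\<le>n. Gc n n $$ (j,l) * minv (Gc (Suc n) (Suc n)) $$ (sh i l, k))"
  proof (rule top_sum)
    fix l assume l: "l \<in> {..n}"
    have "sh i l \<le> Suc n" using l by (simp add: sh_def)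
    then have "top (Suc n) (mon (Suc n) (sh i l)) (\<lambda>k. minv (Gc (Suc n) (Suc n)) $$ (sh i l, k))"
      by (rule mon_top)
    then show "top (Suc n) (\<lambda>p. Gc n n $$ (j,l) * mon (Suc n) (sh i l) p)
          (\<lambda>k. Gc n n $$ (j,l) * minv (Gc (Suc n) (Suc n)) $$ (sh i l, k))"
      by (rule top_scale)
  qed simp
  have e: "(\<Sum>l\<le>n. Gc n n $$ (j,l) * mon (Suc n) (sh i l) p) + coord i p * R p = coord i p * P n j p" for p
  proof -
    have "(\<Sum>l\<le>n. Gc n n $$ (j,l) * mon (Suc n) (sh i l) p) = (\<Sum>l\<le>n. coord i p * (Gc n n $$ (j,l) * mon n l p))"
      using coord_mon[OF i] by (intro sum.cong refl) (simp add: mult.left_commute)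
    moreover have "P n j p = (\<Sum>l\<le>n. Gc n n $$ (j,l) * mon n l p) + R p" using R(2) by blast
    ultimately show ?thesis by (simp add: sum_distrib_left distrib_left)
  qed
  have t2: "top (Suc n) (\<lambda>p. coord i p * P n j p)
     (\<lambda>k. \<Sum>l\<le>n. Gc n n $$ (j,l) * minv (Gc (Suc n) (Suc n)) $$ (sh i l, k))"
    using top_low[OF ts low_mul[OF i R(1)]] by (rule top_cong) (simp_all only: e)
  show ?thesis using top_unique[OF t1 t2] k by simp
qed

lemma part1: assumes i: "i \<in> {1,2}"
  shows "A i n = Gc n n * Lmat i n * minv (Gc (n + 1) (n + 1))"
proof -
  have c1: "Gc n n \<in> carrier_mat (n+1) (n+1)" by (rule Gc_carrier) simp
  have c3: "minv (Gc (n + 1) (n + 1)) \<in> carrier_mat (n+2) (n+2)" using Ginv(1)[of "n+1"] by simp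
  have e: "Gc n n * Lmat i n * minv (Gc (n + 1) (n + 1)) = Gc n n * (Lmat i n * minv (Gc (n + 1) (n + 1)))"
    using c1 Lmat_carrier c3 by (rule assoc_mult_mat)
  have c2: "Lmat i n * minv (Gc (n + 1) (n + 1)) \<in> carrier_mat (n+1) (n+2)"
    using Lmat_carrier c3 by (rule mult_carrier_mat)
  have c4: "Gc n n * (Lmat i n * minv (Gc (n + 1) (n + 1))) \<in> carrier_mat (n+1) (n+2)"
    using c1 c2 by (rule mult_carrier_mat)
  have cA: "A i n \<in> carrier_mat (n+1) (n+2)" by (rule A_dim[OF i])
  show ?thesis unfolding e
  proof (rule eq_matI)
    fix j k assume jk: "j < dim_row (Gc n n * (Lmat i n * minv (Gc (n + 1) (n + 1))))"
       "k < dim_col (Gc n n * (Lmat i n * minv (Gc (n + 1) (n + 1))))"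
    then have jk': "j \<le> n" "k \<le> n + 1" using c4 by auto
    have lt: "{..<n+1} = {..n}" by auto
    have "(Gc n n * (Lmat i n * minv (Gc (n + 1) (n + 1)))) $$ (j,k)
       = (\<Sum>l<n+1. Gc n n $$ (j,l) * (Lmat i n * minv (Gc (n + 1) (n + 1))) $$ (l,k))"
      using jk' by (intro mat_mult_entry[OF c1 c2]) auto
    also have "\<dots> = (\<Sum>l\<le>n. Gc n n $$ (j,l) * minv (Gc (n+1) (n+1)) $$ (sh i l, k))"
      unfolding lt
    proof (rule sum.cong[OF refl])
      fix l assume "l \<in> {..n}"
      then have "(Lmat i n * minv (Gc (n + 1) (n + 1))) $$ (l,k) = minv (Gc (n+1) (n+1)) $$ (sh i l, k)"
        using jk' c3 by (intro Lmat_mult) auto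
      then show "Gc n n $$ (j,l) * (Lmat i n * minv (Gc (n + 1) (n + 1))) $$ (l,k)
          = Gc n n $$ (j,l) * minv (Gc (n+1) (n+1)) $$ (sh i l, k)" by simp
    qed
    finally show "A i n $$ (j,k) = (Gc n n * (Lmat i n * minv (Gc (n + 1) (n + 1)))) $$ (j,k)"
      using A_entry[OF i jk'] by simp
  next
    show "dim_row (A i n) = dim_row (Gc n n * (Lmat i n * minv (Gc (n + 1) (n + 1))))"
      using carrier_matD[OF cA] carrier_matD[OF c4] carrier_matD[OF c1] carrier_matD[OF c2] by simp
    show "dim_col (A i n) = dim_col (Gc n n * (Lmat i n * minv (Gc (n + 1) (n + 1))))"
      using carrier_matD[OF cA] carrier_matD[OF c4] carrier_matD[OF c1] carrier_matD[OF c2] by simp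
  qed
qed

end


definition dmon :: "nat \<Rightarrow> nat \<Rightarrow> nat \<Rightarrow> real \<times> real \<Rightarrow> real" where
  "dmon i k l p = (if i = 1 then real (k - l) * mon (k - 1) l p else real l * mon (k - 1) (l - 1) p)"

lemma DERIV_mon1: "l \<le> k \<Longrightarrow> ((\<lambda>t. mon k l (t,y)) has_real_derivative dmon 1 k l (x,y)) (at x)"
proof -
  assume l: "l \<le> k"
  have "((\<lambda>t. t ^ (k - l) * y ^ l) has_real_derivative (real (k - l) * x ^ (k - l - Suc 0)) * y ^ l) (at x)"
    by (intro DERIV_cmult_right DERIV_pow)
  moreover have "k - l - Suc 0 = k - 1 - l" by simp
  ultimately show ?thesis unfolding mon_def dmon_def by (simp add: mult.assoc)
qed

lemma DERIV_mon2: "l \<le> k \<Longrightarrow> ((\<lambda>t. mon k l (x,t)) has_real_derivative dmon 2 k l (x,y)) (at y)"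
proof -
  assume l: "l \<le> k"
  have d: "((\<lambda>t. x ^ (k - l) * t ^ l) has_real_derivative x ^ (k - l) * (real l * y ^ (l - Suc 0))) (at y)"
    by (intro DERIV_cmult DERIV_pow)
  show ?thesis
  proof (cases "l = 0")
    case True
    then show ?thesis using d unfolding mon_def dmon_def by simp
  next
    case False
    then have "k - 1 - (l - 1) = k - l" using l by simp
    then show ?thesis using d False unfolding mon_def dmon_def by (simp add: mult_ac)
  qed
qed

context frs begin

lemma partial_P: assumes i: "i \<in> {1,2}" and j: "j \<le> m"
  shows "partial i (P m j) p = (\<Sum>k\<le>m. \<Sum>l\<le>k. Gc m k $$ (j,l) * dmon i k l p)"
proof (cases p)
  case (Pair x y)
  show ?thesis
  proof (cases "i = 1")
    case True
    have "((\<lambda>t. \<Sum>k\<le>m. \<Sum>l\<le>k. Gc m k $$ (j,l) * mon k l (t,y)) has_real_derivative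
            (\<Sum>k\<le>m. \<Sum>l\<le>k. Gc m k $$ (j,l) * dmon 1 k l (x,y))) (at x)"
      by (intro DERIV_sum DERIV_cmult DERIV_mon1) simp
    then have "((\<lambda>t. P m j (t,y)) has_real_derivative
            (\<Sum>k\<le>m. \<Sum>l\<le>k. Gc m k $$ (j,l) * dmon 1 k l (x,y))) (at x)"
      unfolding polyP_exp[OF j] .
    then show ?thesis unfolding partial_def Pair using True by (simp add: DERIV_imp_deriv)
  next
    case False
    then have i2: "i = 2" using i by simp
    have "((\<lambda>t. \<Sum>k\<le>m. \<Sum>l\<le>k. Gc m k $$ (j,l) * mon k l (x,t)) has_real_derivative
            (\<Sum>k\<le>m. \<Sum>l\<le>k. Gc m k $$ (j,l) * dmon 2 k l (x,y))) (at y)"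
      by (intro DERIV_sum DERIV_cmult DERIV_mon2) simp
    then have "((\<lambda>t. P m j (x,t)) has_real_derivative
            (\<Sum>k\<le>m. \<Sum>l\<le>k. Gc m k $$ (j,l) * dmon 2 k l (x,y))) (at y)"
      unfolding polyP_exp[OF j] .
    then show ?thesis unfolding partial_def Pair using i2 by (simp add: DERIV_imp_deriv)
  qed
qed

lemma low_zero_fun: "(\<And>p. f p = 0) \<Longrightarrow> low M f"
  by (rule low_cong[OF low0]) simp

lemma dmon_low: assumes i: "i \<in> {1,2}" and l: "l \<le> k" shows "low k (dmon i k l)"
proof (cases "i = 1")
  case True
  show ?thesis
  proof (cases "l < k")
    case True
    then have "low (Suc (k - 1)) (mon (k - 1) l)" by (intro mon_low) simp
    then have "low k (mon (k - 1) l)" using True by simp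
    then show ?thesis using \<open>i = 1\<close> unfolding dmon_def by (simp add: low_scale)
  next
    case False
    then show ?thesis using \<open>i = 1\<close> l by (intro low_zero_fun) (simp add: dmon_def)
  qed
next
  case False
  then have i2: "i = 2" using i by simp
  show ?thesis
  proof (cases "l = 0")
    case False
    then have "low (Suc (k - 1)) (mon (k - 1) (l - 1))" using l by (intro mon_low) simp
    then have "low k (mon (k - 1) (l - 1))" using False l by simp
    then show ?thesis using i2 unfolding dmon_def by (simp add: low_scale)
  next
    case True
    then show ?thesis using i2 by (intro low_zero_fun) (simp add: dmon_def)
  qed
qed

definition dvec :: "nat \<Rightarrow> nat \<Rightarrow> nat \<Rightarrow> nat \<Rightarrow> real" where
  "dvec i n l k = (if i = 1 then real (n - l) * minv (Gc (n-1) (n-1)) $$ (l,k)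
     else real l * minv (Gc (n-1) (n-1)) $$ (l-1,k))"

lemma top_zero: "(\<And>p. f p = 0) \<Longrightarrow> (\<And>k. v k = 0) \<Longrightarrow> top M f v"
  unfolding top_def vp_def by (intro low_zero_fun) simp

lemma dmon_top: assumes i: "i \<in> {1,2}" and n: "1 \<le> n" and l: "l \<le> n"
  shows "top (n - 1) (dmon i n l) (dvec i n l)"
proof (cases "i = 1")
  case True
  show ?thesis
  proof (cases "l < n")
    case True
    then have "top (n-1) (mon (n - 1) l) (\<lambda>k. minv (Gc (n-1) (n-1)) $$ (l,k))" by (intro mon_top) simp
    from top_scale[OF this, of "real (n - l)"]
    show ?thesis using \<open>i = 1\<close> unfolding dmon_def dvec_def by simp
  next
    case False
    then show ?thesis using \<open>i = 1\<close> l by (intro top_zero) (simp_all add: dmon_def dvec_def)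
  qed
next
  case False
  then have i2: "i = 2" using i by simp
  show ?thesis
  proof (cases "l = 0")
    case False
    then have "top (n-1) (mon (n - 1) (l - 1)) (\<lambda>k. minv (Gc (n-1) (n-1)) $$ (l - 1,k))" using l by (intro mon_top) simp
    from top_scale[OF this, of "real l"]
    show ?thesis using i2 unfolding dmon_def dvec_def by simp
  next
    case True
    then show ?thesis using i2 by (intro top_zero) (simp_all add: dmon_def dvec_def)
  qed
qed

lemma B_entry:
  assumes i: "i \<in> {1,2}" and n: "1 \<le> n" and j: "j \<le> n" and k: "k \<le> n - 1"
  shows "B i n $$ (j,k) = (\<Sum>l\<le>n. Gc n n $$ (j,l) * dvec i n l k)"
proof -
  have cB: "B i n \<in> carrier_mat (n+1) n" by (rule B_dim[OF i n])
  have nn: "n - 1 + 1 = n" using n by simp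
  have lt: "{..<n} = {..n-1}" using n by auto
  define Cp where "Cp p = (if n < 3 then 0 else (C i n *\<^sub>v polyvec Gc (n - 3) p) $ j)" for p
  have lowC: "low (n-1) Cp"
  proof (cases "n < 3")
    case True then show ?thesis unfolding Cp_def by (intro low_zero_fun) simp
  next
    case False
    have cC: "C i n \<in> carrier_mat (n+1) (n-2)" by (rule C_dim[OF i n])
    have e: "Cp p = vp (n-3) (\<lambda>k. C i n $$ (j,k)) p" for p
    proof -
      have "(C i n *\<^sub>v polyvec Gc (n - 3) p) $ j = (\<Sum>k<n-2. C i n $$ (j,k) * polyvec Gc (n - 3) p $ k)"
        using cC j False by (intro mat_vec_sum) auto
      also have "\<dots> = vp (n-3) (\<lambda>k. C i n $$ (j,k)) p"
        unfolding vp_def using False by (intro sum.reindex_bij_witness[of _ id id]) auto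
      finally show ?thesis unfolding Cp_def using False by simp
    qed
    have "low (n-1) (vp (n-3) (\<lambda>k. C i n $$ (j,k)))" using False by (intro low_vp) simp
    then show ?thesis by (rule low_cong) (simp add: e)
  qed
  have eq1: "partial i (P n j) p = vp (n-1) (\<lambda>k. B i n $$ (j,k)) p + Cp p" for p
  proof -
    have "vec (n + 1) (\<lambda>j. partial i (P n j) p) $ j = (B i n *\<^sub>v polyvec Gc (n - 1) p +
        (if n < 3 then 0\<^sub>v (n + 1) else C i n *\<^sub>v polyvec Gc (n - 3) p)) $ j"
      using BC_rel[OF i n] by simp
    moreover have "(B i n *\<^sub>v polyvec Gc (n - 1) p +
        (if n < 3 then 0\<^sub>v (n + 1) else C i n *\<^sub>v polyvec Gc (n - 3) p)) $ j
       = (B i n *\<^sub>v polyvec Gc (n - 1) p) $ j + Cp p"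
    proof (cases "n < 3")
      case True then show ?thesis unfolding Cp_def using j by simp
    next
      case False
      have cC: "C i n \<in> carrier_mat (n+1) (n-2)" by (rule C_dim[OF i n])
      then show ?thesis unfolding Cp_def using False j by (subst index_add_vec(1)) auto
    qed
    moreover have "(B i n *\<^sub>v polyvec Gc (n - 1) p) $ j = vp (n-1) (\<lambda>k. B i n $$ (j,k)) p"
    proof -
      have "(B i n *\<^sub>v polyvec Gc (n - 1) p) $ j = (\<Sum>k<n. B i n $$ (j,k) * polyvec Gc (n - 1) p $ k)"
        using cB j nn by (intro mat_vec_sum) auto
      also have "\<dots> = vp (n-1) (\<lambda>k. B i n $$ (j,k)) p"
        unfolding vp_def lt using n by (intro sum.cong refl) simp
      finally show ?thesis .
    qed
    ultimately show ?thesis using j by simp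
  qed
  have t1: "top (n-1) (partial i (P n j)) (\<lambda>k. B i n $$ (j,k))"
    using top_low[OF top_vp lowC] by (rule top_cong) (simp_all add: eq1)
  have ts: "top (n-1) (\<lambda>p. \<Sum>l\<le>n. Gc n n $$ (j,l) * dmon i n l p) (\<lambda>k. \<Sum>l\<le>n. Gc n n $$ (j,l) * dvec i n l k)"
  proof (rule top_sum)
    fix l assume "l \<in> {..n}"
    then show "top (n-1) (\<lambda>p. Gc n n $$ (j,l) * dmon i n l p) (\<lambda>k. Gc n n $$ (j,l) * dvec i n l k)"
      using dmon_top[OF i n] by (intro top_scale) simp
  qed simp
  have lr: "low (n-1) (\<lambda>p. \<Sum>k<n. \<Sum>l\<le>k. Gc n k $$ (j,l) * dmon i k l p)"
  proof (rule low_sum)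
    fix k assume k: "k \<in> {..<n}"
    show "low (n-1) (\<lambda>p. \<Sum>l\<le>k. Gc n k $$ (j,l) * dmon i k l p)"
    proof (rule low_sum)
      fix l assume "l \<in> {..k}"
      then have "low k (dmon i k l)" by (intro dmon_low[OF i]) simp
      then have "low (n-1) (dmon i k l)" by (rule low_mono) (use k in simp)
      then show "low (n-1) (\<lambda>p. Gc n k $$ (j,l) * dmon i k l p)" by (rule low_scale)
    qed simp
  qed simp
  have eq2: "(\<Sum>l\<le>n. Gc n n $$ (j,l) * dmon i n l p) + (\<Sum>k<n. \<Sum>l\<le>k. Gc n k $$ (j,l) * dmon i k l p)
     = partial i (P n j) p" for p
    unfolding partial_P[OF i j] lessThan_Suc_atMost[symmetric] sum.lessThan_Suc by simp
  have t2: "top (n-1) (partial i (P n j)) (\<lambda>k. \<Sum>l\<le>n. Gc n n $$ (j,l) * dvec i n l k)"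
    using top_low[OF ts lr] by (rule top_cong) (simp_all only: eq2)
  show ?thesis using top_unique[OF t1 t2 k] .
qed

end


lemma Nmat_carrier: "Nmat i n \<in> carrier_mat n n"
  unfolding Nmat_def by (rule mat_carrier)

lemma Nmat_entry: "r < n \<Longrightarrow> c < n \<Longrightarrow>
   Nmat i n $$ (r,c) = (if r = c then (if i = 1 then real (n - r) else real (r + 1)) else 0)"
  unfolding Nmat_def by (simp only: index_mat(1)) simp

lemma N_mult: assumes "Y \<in> carrier_mat n c" "a < n" "k < c"
  shows "(Nmat i n * Y) $$ (a,k) = (if i = 1 then real (n - a) else real (a + 1)) * Y $$ (a,k)"
proof -
  have "(Nmat i n * Y) $$ (a,k) = (\<Sum>b<n. Nmat i n $$ (a,b) * Y $$ (b,k))"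
    using assms by (intro mat_mult_entry[OF Nmat_carrier]) auto
  also have "\<dots> = (\<Sum>b<n. if a = b then (if i = 1 then real (n - a) else real (a + 1)) * Y $$ (b,k) else 0)"
    using assms(2) by (intro sum.cong refl) (simp add: Nmat_entry)
  also have "\<dots> = (if i = 1 then real (n - a) else real (a + 1)) * Y $$ (a,k)"
    using assms(2) by (simp only: sum.delta' finite_lessThan) simp
  finally show ?thesis .
qed

lemma LT_mult: assumes Y: "Y \<in> carrier_mat n c" and n: "1 \<le> n" and l: "l \<le> n" and k: "k < c"
  shows "(transpose_mat (Lmat i (n-1)) * Y) $$ (l,k) = (\<Sum>a<n. if sh i a = l then Y $$ (a,k) else 0)"
proof -
  have cL: "transpose_mat (Lmat i (n-1)) \<in> carrier_mat (n+1) n"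
    using Lmat_carrier[of i "n-1"] n by simp
  have "(transpose_mat (Lmat i (n-1)) * Y) $$ (l,k) = (\<Sum>a<n. transpose_mat (Lmat i (n-1)) $$ (l,a) * Y $$ (a,k))"
    using l k by (intro mat_mult_entry[OF cL Y]) auto
  also have "\<dots> = (\<Sum>a<n. if sh i a = l then Y $$ (a,k) else 0)"
  proof (intro sum.cong refl)
    fix a assume a: "a \<in> {..<n}"
    have "transpose_mat (Lmat i (n-1)) $$ (l,a) = Lmat i (n-1) $$ (a,l)"
      using a l n Lmat_carrier[of i "n-1"] by (intro index_transpose_mat(1)) auto
    also have "\<dots> = (if sh i a = l then 1 else 0)" using a l n by (intro Lmat_entry) auto
    finally show "transpose_mat (Lmat i (n-1)) $$ (l,a) * Y $$ (a,k) = (if sh i a = l then Y $$ (a,k) else 0)"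
      by simp
  qed
  finally show ?thesis .
qed

context frs begin

lemma LNH_entry: assumes i: "i \<in> {1,2}" and n: "1 \<le> n" and l: "l \<le> n" and k: "k < n"
  shows "(transpose_mat (Lmat i (n-1)) * (Nmat i n * minv (Gc (n-1) (n-1)))) $$ (l,k) = dvec i n l k"
proof -
  have cH: "minv (Gc (n-1) (n-1)) \<in> carrier_mat n n" using Ginv(1)[of "n-1"] n by simp
  have cNH: "Nmat i n * minv (Gc (n-1) (n-1)) \<in> carrier_mat n n"
    using Nmat_carrier cH by (rule mult_carrier_mat)
  have "(transpose_mat (Lmat i (n-1)) * (Nmat i n * minv (Gc (n-1) (n-1)))) $$ (l,k)
     = (\<Sum>a<n. if sh i a = l then (Nmat i n * minv (Gc (n-1) (n-1))) $$ (a,k) else 0)"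
    by (rule LT_mult[OF cNH n l k])
  also have "\<dots> = (\<Sum>a<n. if sh i a = l then (if i = 1 then real (n - a) else real (a + 1)) * minv (Gc (n-1) (n-1)) $$ (a,k) else 0)"
  proof (intro sum.cong refl)
    fix a assume "a \<in> {..<n}"
    then have "(Nmat i n * minv (Gc (n-1) (n-1))) $$ (a,k) = (if i = 1 then real (n - a) else real (a + 1)) * minv (Gc (n-1) (n-1)) $$ (a,k)"
      using k by (intro N_mult[OF cH]) auto
    then show "(if sh i a = l then (Nmat i n * minv (Gc (n-1) (n-1))) $$ (a,k) else 0) =
      (if sh i a = l then (if i = 1 then real (n - a) else real (a + 1)) * minv (Gc (n-1) (n-1)) $$ (a,k) else 0)"
      by simp
  qed
  also have "\<dots> = dvec i n l k"
  proof (cases "i = 1")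
    case True
    have "(\<Sum>a<n. if sh i a = l then (if i = 1 then real (n - a) else real (a + 1)) * minv (Gc (n-1) (n-1)) $$ (a,k) else 0)
       = (\<Sum>a<n. if a = l then real (n - a) * minv (Gc (n-1) (n-1)) $$ (a,k) else 0)"
      using True by (intro sum.cong refl) (simp add: sh_def)
    also have "\<dots> = (if l < n then real (n - l) * minv (Gc (n-1) (n-1)) $$ (l,k) else 0)"
      by (simp only: sum.delta finite_lessThan) simp
    also have "\<dots> = dvec i n l k" using True l by (auto simp: dvec_def)
    finally show ?thesis .
  next
    case False
    then have i2: "i = 2" using i by simp
    show ?thesis
    proof (cases "l = 0")
      case True
      have "(\<Sum>a<n. if sh i a = l then (if i = 1 then real (n - a) else real (a + 1)) * minv (Gc (n-1) (n-1)) $$ (a,k) else 0) = 0"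
        using True i2 by (intro sum.neutral) (simp add: sh_def)
      then show ?thesis using True i2 by (simp add: dvec_def)
    next
      case False
      have "(\<Sum>a<n. if sh i a = l then (if i = 1 then real (n - a) else real (a + 1)) * minv (Gc (n-1) (n-1)) $$ (a,k) else 0)
       = (\<Sum>a<n. if a = l - 1 then real (a + 1) * minv (Gc (n-1) (n-1)) $$ (a,k) else 0)"
        using False i2 by (intro sum.cong refl) (auto simp: sh_def)
      also have "\<dots> = real (l - 1 + 1) * minv (Gc (n-1) (n-1)) $$ (l - 1,k)"
        using l False by (simp only: sum.delta finite_lessThan) simp
      also have "\<dots> = dvec i n l k" using False i2 by (simp add: dvec_def)
      finally show ?thesis .
    qed
  qed
  finally show ?thesis .
qed

lemma part2: assumes i: "i \<in> {1,2}" and n: "1 \<le> n"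
  shows "B i n = Gc n n * transpose_mat (Lmat i (n - 1)) * Nmat i n * minv (Gc (n - 1) (n - 1))"
proof -
  have c1: "Gc n n \<in> carrier_mat (n+1) (n+1)" by (rule Gc_carrier) simp
  have cH: "minv (Gc (n-1) (n-1)) \<in> carrier_mat n n" using Ginv(1)[of "n-1"] n by simp
  have cL: "transpose_mat (Lmat i (n-1)) \<in> carrier_mat (n+1) n"
    using Lmat_carrier[of i "n-1"] n by simp
  have cNH: "Nmat i n * minv (Gc (n-1) (n-1)) \<in> carrier_mat n n"
    using Nmat_carrier cH by (rule mult_carrier_mat)
  have cX: "transpose_mat (Lmat i (n-1)) * (Nmat i n * minv (Gc (n-1) (n-1))) \<in> carrier_mat (n+1) n"
    using cL cNH by (rule mult_carrier_mat)
  have cGL: "Gc n n * transpose_mat (Lmat i (n - 1)) \<in> carrier_mat (n+1) n" using c1 cL by (rule mult_carrier_mat)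
  have e: "Gc n n * transpose_mat (Lmat i (n - 1)) * Nmat i n * minv (Gc (n - 1) (n - 1))
     = Gc n n * (transpose_mat (Lmat i (n-1)) * (Nmat i n * minv (Gc (n-1) (n-1))))"
  proof -
    have "Gc n n * transpose_mat (Lmat i (n - 1)) * Nmat i n * minv (Gc (n - 1) (n - 1))
        = Gc n n * transpose_mat (Lmat i (n - 1)) * (Nmat i n * minv (Gc (n - 1) (n - 1)))"
      using cGL Nmat_carrier cH by (rule assoc_mult_mat)
    also have "\<dots> = Gc n n * (transpose_mat (Lmat i (n-1)) * (Nmat i n * minv (Gc (n-1) (n-1))))"
      using c1 cL cNH by (rule assoc_mult_mat)
    finally show ?thesis .
  qed
  have c4: "Gc n n * (transpose_mat (Lmat i (n-1)) * (Nmat i n * minv (Gc (n-1) (n-1)))) \<in> carrier_mat (n+1) n"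
    using c1 cX by (rule mult_carrier_mat)
  have cB: "B i n \<in> carrier_mat (n+1) n" by (rule B_dim[OF i n])
  show ?thesis unfolding e
  proof (rule eq_matI)
    fix j k assume jk: "j < dim_row (Gc n n * (transpose_mat (Lmat i (n-1)) * (Nmat i n * minv (Gc (n-1) (n-1)))))"
       "k < dim_col (Gc n n * (transpose_mat (Lmat i (n-1)) * (Nmat i n * minv (Gc (n-1) (n-1)))))"
    then have jk': "j \<le> n" "k < n" using c4 by auto
    have lt: "{..<n+1} = {..n}" by auto
    have "(Gc n n * (transpose_mat (Lmat i (n-1)) * (Nmat i n * minv (Gc (n-1) (n-1))))) $$ (j,k)
       = (\<Sum>l<n+1. Gc n n $$ (j,l) * (transpose_mat (Lmat i (n-1)) * (Nmat i n * minv (Gc (n-1) (n-1)))) $$ (l,k))"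
      using jk' by (intro mat_mult_entry[OF c1 cX]) auto
    also have "\<dots> = (\<Sum>l\<le>n. Gc n n $$ (j,l) * dvec i n l k)"
      unfolding lt
    proof (intro sum.cong refl)
      fix l assume "l \<in> {..n}"
      then have "(transpose_mat (Lmat i (n-1)) * (Nmat i n * minv (Gc (n-1) (n-1)))) $$ (l,k) = dvec i n l k"
        using jk' by (intro LNH_entry[OF i n]) auto
      then show "Gc n n $$ (j,l) * (transpose_mat (Lmat i (n-1)) * (Nmat i n * minv (Gc (n-1) (n-1)))) $$ (l,k)
         = Gc n n $$ (j,l) * dvec i n l k" by simp
    qed
    finally show "B i n $$ (j,k) = (Gc n n * (transpose_mat (Lmat i (n-1)) * (Nmat i n * minv (Gc (n-1) (n-1))))) $$ (j,k)"
      using B_entry[OF i n jk'(1)] jk' by simp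
  next
    show "dim_row (B i n) = dim_row (Gc n n * (transpose_mat (Lmat i (n-1)) * (Nmat i n * minv (Gc (n-1) (n-1)))))"
      using carrier_matD[OF cB] carrier_matD[OF c4] by simp
    show "dim_col (B i n) = dim_col (Gc n n * (transpose_mat (Lmat i (n-1)) * (Nmat i n * minv (Gc (n-1) (n-1)))))"
      using carrier_matD[OF cB] carrier_matD[OF c4] by simp
  qed
qed

end

lemma LLT: "Lmat i n * transpose_mat (Lmat i n) = 1\<^sub>m (n+1)"
proof (rule eq_matI)
  have cLT: "transpose_mat (Lmat i n) \<in> carrier_mat (n+2) (n+1)" using Lmat_carrier by simp
  fix b c assume bc: "b < dim_row (1\<^sub>m (n+1) :: real mat)" "c < dim_col (1\<^sub>m (n+1) :: real mat)"
  then have bc': "b \<le> n" "c < n + 1" by auto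
  have "(Lmat i n * transpose_mat (Lmat i n)) $$ (b,c) = transpose_mat (Lmat i n) $$ (sh i b, c)"
    by (rule Lmat_mult[OF cLT bc'])
  also have "\<dots> = Lmat i n $$ (c, sh i b)" using bc' Lmat_carrier[of i n]
    by (intro index_transpose_mat(1)) (auto simp: sh_def)
  also have "\<dots> = (if sh i c = sh i b then 1 else 0)" using bc' by (intro Lmat_entry) (auto simp: sh_def)
  also have "\<dots> = 1\<^sub>m (n+1) $$ (b,c)" using bc' by (auto simp: sh_def)
  finally show "(Lmat i n * transpose_mat (Lmat i n)) $$ (b,c) = 1\<^sub>m (n+1) $$ (b,c)" .
next
  show "dim_row (Lmat i n * transpose_mat (Lmat i n)) = dim_row (1\<^sub>m (n+1) :: real mat)"
    using Lmat_carrier[of i n] by simp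
  show "dim_col (Lmat i n * transpose_mat (Lmat i n)) = dim_col (1\<^sub>m (n+1) :: real mat)"
    using Lmat_carrier[of i n] by simp
qed

context frs begin

lemma part4: assumes i: "i \<in> {1,2}"
  shows "A i n * (Gc (n + 1) (n + 1) * transpose_mat (Lmat i n) * minv (Gc n n)) = 1\<^sub>m (n + 1)"
proof -
  let ?G = "Gc n n" and ?H = "minv (Gc n n)" and ?G1 = "Gc (n+1) (n+1)" and ?H1 = "minv (Gc (n+1) (n+1))"
    and ?L = "Lmat i n" and ?LT = "transpose_mat (Lmat i n)"
  have cG: "?G \<in> carrier_mat (n+1) (n+1)" by (rule Gc_carrier) simp
  have cH: "?H \<in> carrier_mat (n+1) (n+1)" by (rule Ginv(1))
  have cG1: "?G1 \<in> carrier_mat (n+2) (n+2)" using Gc_carrier[of "n+1" "n+1"] by simp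
  have cH1: "?H1 \<in> carrier_mat (n+2) (n+2)" using Ginv(1)[of "n+1"] by simp
  have cL: "?L \<in> carrier_mat (n+1) (n+2)" by (rule Lmat_carrier)
  have cLT: "?LT \<in> carrier_mat (n+2) (n+1)" using cL by simp
  have HG1: "?H1 * ?G1 = 1\<^sub>m (n+2)" using Ginv(2)[of "n+1"] by simp
  have GH: "?G * ?H = 1\<^sub>m (n+1)" by (rule Ginv(3))
  have cLTH: "?LT * ?H \<in> carrier_mat (n+2) (n+1)" using cLT cH by (rule mult_carrier_mat)
  have "?G1 * ?LT * ?H = ?G1 * (?LT * ?H)" using cG1 cLT cH by (rule assoc_mult_mat)
  then have "A i n * (?G1 * ?LT * ?H) = (?G * ?L * ?H1) * (?G1 * (?LT * ?H))"
    using part1[OF i, of n] by simp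
  also have "\<dots> = (?G * ?L) * (?H1 * (?G1 * (?LT * ?H)))"
    using mult_carrier_mat[OF cG cL] cH1 mult_carrier_mat[OF cG1 cLTH] by (rule assoc_mult_mat)
  also have "?H1 * (?G1 * (?LT * ?H)) = (?H1 * ?G1) * (?LT * ?H)"
    using cH1 cG1 cLTH by (rule assoc_mult_mat[symmetric])
  also have "\<dots> = ?LT * ?H" unfolding HG1 using cLTH by (rule left_mult_one_mat)
  also have "(?G * ?L) * (?LT * ?H) = ?G * (?L * (?LT * ?H))"
    using cG cL cLTH by (rule assoc_mult_mat)
  also have "?L * (?LT * ?H) = (?L * ?LT) * ?H"
    using cL cLT cH by (rule assoc_mult_mat[symmetric])
  also have "\<dots> = ?H" unfolding LLT using cH by (rule left_mult_one_mat)
  also have "?G * ?H = 1\<^sub>m (n+1)" by (rule GH)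
  finally show ?thesis .
qed

end


lemma trans_integrable:
  fixes f :: "real \<times> real \<Rightarrow> real"
  assumes f: "integrable lborel f"
  shows "integrable lborel (\<lambda>p. f (c + p))" "integral\<^sup>L lborel (\<lambda>p. f (c + p)) = integral\<^sup>L lborel f"
proof -
  have fm: "f \<in> borel_measurable borel" using borel_measurable_integrable[OF f] by simp
  have gm: "(+) c \<in> measurable lborel borel" by (simp add: borel_measurable_continuous_onI continuous_intros)
  have "integrable (distr lborel borel ((+) c)) f" unfolding lborel_distr_plus by (rule f)
  then show "integrable lborel (\<lambda>p. f (c + p))" using integrable_distr_eq[OF gm fm] by simp
  have "integral\<^sup>L (distr lborel borel ((+) c)) f = integral\<^sup>L lborel (\<lambda>p. f (c + p))"
    by (rule integral_distr[OF gm fm])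
  then show "integral\<^sup>L lborel (\<lambda>p. f (c + p)) = integral\<^sup>L lborel f" unfolding lborel_distr_plus by simp
qed

lemma ibp:
  fixes h h' :: "real \<times> real \<Rightarrow> real" and e :: "real \<times> real"
  assumes ih: "integrable lborel h" and ih': "integrable lborel h'"
    and d: "\<And>p t. ((\<lambda>u. h (p + u *\<^sub>R e)) has_real_derivative h' (p + t *\<^sub>R e)) (at t)"
    and c: "\<And>p. continuous_on UNIV (\<lambda>t. h' (p + t *\<^sub>R e))"
  shows "integral\<^sup>L lborel h' = 0"
proof -
  define f where "f = (\<lambda>(t::real, p::real\<times>real). indicator {0..1} t * h' (p + t *\<^sub>R e))"
  have hm: "h' \<in> borel_measurable borel" using borel_measurable_integrable[OF ih'] by simp
  have gm: "(\<lambda>x::real\<times>(real\<times>real). snd x + fst x *\<^sub>R e) \<in> borel_measurable borel"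
    by (intro borel_measurable_continuous_onI continuous_intros)
  have hgm: "(\<lambda>x::real\<times>(real\<times>real). h' (snd x + fst x *\<^sub>R e)) \<in> borel_measurable borel"
    using measurable_compose[OF gm hm] by (simp add: comp_def)
  have im: "(\<lambda>x::real\<times>(real\<times>real). indicator {0..1} (fst x) :: real) \<in> borel_measurable borel"
  proof -
    have "(\<lambda>x::real\<times>(real\<times>real). indicator {0..1} (fst x) :: real) = indicator ({0..1} \<times> UNIV)"
      by (auto simp: fun_eq_iff indicator_def)
    moreover have "{0..1::real} \<times> (UNIV::(real\<times>real) set) \<in> sets borel"
      by (intro borel_closed closed_Times) auto
    ultimately show ?thesis by (simp add: borel_measurable_indicator)
  qed
  have fm: "f \<in> borel_measurable (lborel \<Otimes>\<^sub>M lborel)"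
  proof -
    have "(\<lambda>x::real\<times>(real\<times>real). indicator {0..1} (fst x) * h' (snd x + fst x *\<^sub>R e)) \<in> borel_measurable borel"
      using im hgm by (rule borel_measurable_times)
    moreover have "f = (\<lambda>x::real\<times>(real\<times>real). indicator {0..1} (fst x) * h' (snd x + fst x *\<^sub>R e))"
      unfolding f_def by (auto simp: fun_eq_iff)
    ultimately show ?thesis unfolding lborel_prod by simp
  qed
  define N where "N = integral\<^sup>L lborel (\<lambda>p. norm (h' p))"
  have ihn: "integrable lborel (\<lambda>p. norm (h' p))" using ih' by simp
  have sec_int: "integrable lborel (\<lambda>p. f (t, p))" for t
  proof -
    have "integrable lborel (\<lambda>p. h' (t *\<^sub>R e + p))" by (rule trans_integrable(1)[OF ih'])
    then have "integrable lborel (\<lambda>p. indicator {0..1} t * h' (t *\<^sub>R e + p))" by simp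
    then show ?thesis unfolding f_def by (simp add: add.commute)
  qed
  have sec_norm: "(\<integral>p. norm (f (t, p)) \<partial>lborel) = indicator {0..1} t * N" for t
  proof -
    have "(\<integral>p. norm (f (t, p)) \<partial>lborel) = (\<integral>p. indicator {0..1} t * norm (h' (t *\<^sub>R e + p)) \<partial>lborel)"
      unfolding f_def by (intro Bochner_Integration.integral_cong refl) (auto simp: add.commute indicator_def)
    also have "\<dots> = indicator {0..1} t * (\<integral>p. norm (h' (t *\<^sub>R e + p)) \<partial>lborel)"
      by (rule integral_mult_right_zero)
    also have "(\<integral>p. norm (h' (t *\<^sub>R e + p)) \<partial>lborel) = N"
      unfolding N_def by (rule trans_integrable(2)[OF ihn])
    finally show ?thesis .
  qed
  have sec_val: "(\<integral>p. f (t, p) \<partial>lborel) = indicator {0..1} t * integral\<^sup>L lborel h'" for t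
  proof -
    have "(\<integral>p. f (t, p) \<partial>lborel) = (\<integral>p. indicator {0..1} t * h' (t *\<^sub>R e + p) \<partial>lborel)"
      unfolding f_def by (intro Bochner_Integration.integral_cong refl) (auto simp: add.commute)
    also have "\<dots> = indicator {0..1} t * (\<integral>p. h' (t *\<^sub>R e + p) \<partial>lborel)"
      by (rule integral_mult_right_zero)
    also have "(\<integral>p. h' (t *\<^sub>R e + p) \<partial>lborel) = integral\<^sup>L lborel h'"
      by (rule trans_integrable(2)[OF ih'])
    finally show ?thesis .
  qed
  have iind: "integrable lborel (\<lambda>t::real. indicator {0..1} t * N)"
    using integrable_real_indicator[of "{0..1::real}" lborel] by simp
  have fint: "integrable (lborel \<Otimes>\<^sub>M lborel) f"
  proof (rule lborel_pair.Fubini_integrable[OF fm])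
    show "integrable lborel (\<lambda>t. \<integral>p. norm (f (t, p)) \<partial>lborel)" unfolding sec_norm by (rule iind)
    show "AE t in lborel. integrable lborel (\<lambda>p. f (t, p))" using sec_int by simp
  qed
  have I1: "(\<integral>t. (\<integral>p. f (t, p) \<partial>lborel) \<partial>lborel) = integral\<^sup>L (lborel \<Otimes>\<^sub>M lborel) f"
    by (rule lborel_pair.integral_fst'[OF fint])
  have "(\<integral>t. (\<integral>p. f (t, p) \<partial>lborel) \<partial>lborel) = (\<integral>t. indicator {0..1::real} t * integral\<^sup>L lborel h' \<partial>lborel)"
    by (simp only: sec_val)
  also have "\<dots> = integral\<^sup>L lborel h'" by simp
  finally have L: "integral\<^sup>L (lborel \<Otimes>\<^sub>M lborel) f = integral\<^sup>L lborel h'" using I1 by simp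
  have fint': "integrable (lborel \<Otimes>\<^sub>M lborel) (\<lambda>(t, p). f (t, p))" using fint by simp
  have I2: "(\<integral>p. (\<integral>t. f (t, p) \<partial>lborel) \<partial>lborel) = integral\<^sup>L (lborel \<Otimes>\<^sub>M lborel) (\<lambda>(t, p). f (t, p))"
    by (rule lborel_pair.integral_snd[OF fint'])
  have ftc: "(\<integral>t. f (t, p) \<partial>lborel) = h (p + e) - h p" for p
  proof -
    have "(LBINT t=ereal 0..ereal 1. h' (p + t *\<^sub>R e)) = h (p + 1 *\<^sub>R e) - h (p + 0 *\<^sub>R e)"
    proof (rule interval_integral_FTC_finite[where F="\<lambda>u. h (p + u *\<^sub>R e)" and f="\<lambda>t. h' (p + t *\<^sub>R e)" and a=0 and b=1])
      show "continuous_on {min 0 1..max 0 1} (\<lambda>t. h' (p + t *\<^sub>R e))"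
        using c[of p] by (rule continuous_on_subset) simp
      fix t :: real
      have "((\<lambda>u. h (p + u *\<^sub>R e)) has_vector_derivative h' (p + t *\<^sub>R e)) (at t)"
        using d[of p t] by (simp add: has_real_derivative_iff_has_vector_derivative)
      then show "((\<lambda>u. h (p + u *\<^sub>R e)) has_vector_derivative h' (p + t *\<^sub>R e)) (at t within {min 0 1..max 0 1})"
        by (rule has_vector_derivative_at_within)
    qed
    moreover have "(LBINT t=ereal 0..ereal 1. h' (p + t *\<^sub>R e)) = (LBINT t:{0..1}. h' (p + t *\<^sub>R e))"
      by (rule interval_integral_Icc) simp
    moreover have "(LBINT t:{0..1}. h' (p + t *\<^sub>R e)) = (\<integral>t. f (t, p) \<partial>lborel)"
      unfolding set_lebesgue_integral_def f_def by simp
    ultimately show ?thesis by simp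
  qed
  have "(\<integral>p. (\<integral>t. f (t, p) \<partial>lborel) \<partial>lborel) = (\<integral>p. h (e + p) - h p \<partial>lborel)"
    unfolding ftc by (simp add: add.commute)
  also have "\<dots> = (\<integral>p. h (e + p) \<partial>lborel) - integral\<^sup>L lborel h"
    by (rule Bochner_Integration.integral_diff[OF trans_integrable(1)[OF ih] ih])
  also have "\<dots> = 0" using trans_integrable(2)[OF ih] by simp
  finally have R: "integral\<^sup>L (lborel \<Otimes>\<^sub>M lborel) f = 0" using I2 by simp
  show ?thesis using L R by simp
qed


definition edir :: "nat \<Rightarrow> real \<times> real" where "edir i = (if i = 1 then (1,0) else (0,1))"

lemma line_eq: "p + u *\<^sub>R edir i = (if i = 1 then (fst p + u, snd p) else (fst p, snd p + u))"
  by (cases p) (simp add: edir_def)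

lemma DERIV_shift1: "((\<lambda>s. g s) has_real_derivative D) (at (a + t)) \<Longrightarrow> ((\<lambda>u. g (a + u)) has_real_derivative D) (at t)"
proof -
  assume "((\<lambda>s. g s) has_real_derivative D) (at (a + t))"
  moreover have "((\<lambda>u. a + u) has_real_derivative 1) (at t)" by (auto intro!: derivative_eq_intros)
  ultimately have "((\<lambda>s. g s) \<circ> (\<lambda>u. a + u) has_real_derivative D * 1) (at t)" by (rule DERIV_chain)
  then show ?thesis by (simp add: comp_def)
qed

context frs begin

definition dq :: "nat \<Rightarrow> real \<times> real \<Rightarrow> real" where
  "dq i p = (if i = 1 then 4*a40* fst p^3 + 2*a22* fst p* snd p^2 + 2*a20* fst p
             else 4*a04* snd p^3 + 2*a22* fst p^2* snd p + 2*a02* snd p)"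

lemma W_alt: "W p = exp (- (a40 * fst p^4 + a22 * fst p^2 * snd p^2 + a04 * snd p^4 + a20 * fst p^2 + a02 * snd p^2))"
  by (cases p) (simp add: freud_W_def freud_q_def)

lemma W_DERIV1: "((\<lambda>s. W (s, b)) has_real_derivative (- dq 1 (x, b) * W (x, b))) (at x)"
proof -
  let ?Q = "\<lambda>s. a40 * s^4 + a22 * s^2 * b^2 + a04 * b^4 + a20 * s^2 + a02 * b^2"
  have dQ: "(?Q has_real_derivative (4*a40*x^3 + 2*a22*x*b^2 + 2*a20*x)) (at x)"
    by (auto intro!: derivative_eq_intros simp: algebra_simps power2_eq_square power3_eq_cube)
  have "((\<lambda>s. exp (- ?Q s)) has_real_derivative exp (- ?Q x) * (- (4*a40*x^3 + 2*a22*x*b^2 + 2*a20*x))) (at x)"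
    by (rule DERIV_fun_exp) (rule DERIV_minus[OF dQ])
  then show ?thesis unfolding W_alt dq_def by (simp add: mult.commute)
qed

lemma W_DERIV2: "((\<lambda>s. W (a, s)) has_real_derivative (- dq 2 (a, x) * W (a, x))) (at x)"
proof -
  let ?Q = "\<lambda>s. a40 * a^4 + a22 * a^2 * s^2 + a04 * s^4 + a20 * a^2 + a02 * s^2"
  have dQ: "(?Q has_real_derivative (4*a04*x^3 + 2*a22*a^2*x + 2*a02*x)) (at x)"
    by (auto intro!: derivative_eq_intros simp: algebra_simps power2_eq_square power3_eq_cube)
  have "((\<lambda>s. exp (- ?Q s)) has_real_derivative exp (- ?Q x) * (- (4*a04*x^3 + 2*a22*a^2*x + 2*a02*x))) (at x)"
    by (rule DERIV_fun_exp) (rule DERIV_minus[OF dQ])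
  then show ?thesis unfolding W_alt dq_def by (simp add: mult.commute)
qed

lemma W_DERIV: assumes i: "i \<in> {1,2}"
  shows "((\<lambda>u. W (p + u *\<^sub>R edir i)) has_real_derivative (- dq i (p + t *\<^sub>R edir i) * W (p + t *\<^sub>R edir i))) (at t)"
proof (cases "i = 1")
  case True
  have "((\<lambda>u. W (fst p + u, snd p)) has_real_derivative (- dq 1 (fst p + t, snd p) * W (fst p + t, snd p))) (at t)"
    using W_DERIV1 by (rule DERIV_shift1)
  then show ?thesis using True by (simp add: line_eq)
next
  case False
  then have i2: "i = 2" using i by simp
  have "((\<lambda>u. W (fst p, snd p + u)) has_real_derivative (- dq 2 (fst p, snd p + t) * W (fst p, snd p + t))) (at t)"
    using W_DERIV2 by (rule DERIV_shift1)
  then show ?thesis using i2 by (simp add: line_eq)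
qed

lemma P_DERIV: assumes i: "i \<in> {1,2}" and j: "j \<le> m"
  shows "((\<lambda>u. P m j (p + u *\<^sub>R edir i)) has_real_derivative partial i (P m j) (p + t *\<^sub>R edir i)) (at t)"
proof (cases "i = 1")
  case True
  have "((\<lambda>u. \<Sum>k\<le>m. \<Sum>l\<le>k. Gc m k $$ (j,l) * mon k l (fst p + u, snd p)) has_real_derivative
      (\<Sum>k\<le>m. \<Sum>l\<le>k. Gc m k $$ (j,l) * dmon 1 k l (fst p + t, snd p))) (at t)"
  proof (intro DERIV_sum DERIV_cmult)
    fix k l assume "k \<in> {..m}" "l \<in> {..k}"
    then have "((\<lambda>s. mon k l (s, snd p)) has_real_derivative dmon 1 k l (fst p + t, snd p)) (at (fst p + t))"
      by (intro DERIV_mon1) simp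
    then show "((\<lambda>u. mon k l (fst p + u, snd p)) has_real_derivative dmon 1 k l (fst p + t, snd p)) (at t)"
      by (rule DERIV_shift1)
  qed
  then show ?thesis using True partial_P[OF i j] by (simp add: line_eq polyP_exp[OF j])
next
  case False
  then have i2: "i = 2" using i by simp
  have "((\<lambda>u. \<Sum>k\<le>m. \<Sum>l\<le>k. Gc m k $$ (j,l) * mon k l (fst p, snd p + u)) has_real_derivative
      (\<Sum>k\<le>m. \<Sum>l\<le>k. Gc m k $$ (j,l) * dmon 2 k l (fst p, snd p + t))) (at t)"
  proof (intro DERIV_sum DERIV_cmult)
    fix k l assume "k \<in> {..m}" "l \<in> {..k}"
    then have "((\<lambda>s. mon k l (fst p, s)) has_real_derivative dmon 2 k l (fst p, snd p + t)) (at (snd p + t))"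
      by (intro DERIV_mon2) simp
    then show "((\<lambda>u. mon k l (fst p, snd p + u)) has_real_derivative dmon 2 k l (fst p, snd p + t)) (at t)"
      by (rule DERIV_shift1)
  qed
  then show ?thesis using i2 partial_P[OF i j] by (simp add: line_eq polyP_exp[OF j])
qed

lemma cont_mon: "continuous_on UNIV (mon k l)"
  unfolding mon_def[abs_def] by (intro continuous_intros)

lemma cont_dmon: "continuous_on UNIV (dmon i k l)"
  unfolding dmon_def[abs_def] mon_def by (cases "i = 1"; simp; intro continuous_intros)

lemma cont_P: "j \<le> m \<Longrightarrow> continuous_on UNIV (P m j)"
proof -
  assume j: "j \<le> m"
  have "P m j = (\<lambda>p. \<Sum>k\<le>m. \<Sum>l\<le>k. Gc m k $$ (j,l) * mon k l p)" using polyP_exp[OF j] by auto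
  moreover have "continuous_on UNIV (\<lambda>p. \<Sum>k\<le>m. \<Sum>l\<le>k. Gc m k $$ (j,l) * mon k l p)"
    by (intro continuous_on_sum continuous_on_mult continuous_on_const cont_mon)
  ultimately show ?thesis by simp
qed

lemma cont_dP: "i \<in> {1,2} \<Longrightarrow> j \<le> m \<Longrightarrow> continuous_on UNIV (partial i (P m j))"
proof -
  assume i: "i \<in> {1,2}" and j: "j \<le> m"
  have "partial i (P m j) = (\<lambda>p. \<Sum>k\<le>m. \<Sum>l\<le>k. Gc m k $$ (j,l) * dmon i k l p)" using partial_P[OF i j] by auto
  moreover have "continuous_on UNIV (\<lambda>p. \<Sum>k\<le>m. \<Sum>l\<le>k. Gc m k $$ (j,l) * dmon i k l p)"
    by (intro continuous_on_sum continuous_on_mult continuous_on_const cont_dmon)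
  ultimately show ?thesis by simp
qed

lemma cont_W: "continuous_on UNIV W"
proof -
  have "W = (\<lambda>p. exp (- (a40 * fst p^4 + a22 * fst p^2 * snd p^2 + a04 * snd p^4 + a20 * fst p^2 + a02 * snd p^2)))"
    using W_alt by auto
  moreover have "continuous_on UNIV (\<lambda>p::real\<times>real. exp (- (a40 * fst p^4 + a22 * fst p^2 * snd p^2 + a04 * snd p^4 + a20 * fst p^2 + a02 * snd p^2)))"
    by (intro continuous_intros)
  ultimately show ?thesis by simp
qed

lemma cont_dq: "continuous_on UNIV (dq i)"
  unfolding dq_def[abs_def] by (cases "i = 1"; simp; intro continuous_intros)

lemma hbi_eq: "has_bochner_integral M f x \<Longrightarrow> (\<And>p. f p = g p) \<Longrightarrow> has_bochner_integral M g x"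
proof -
  assume "has_bochner_integral M f x" "\<And>p. f p = g p"
  moreover have "f = g" using \<open>\<And>p. f p = g p\<close> by auto
  ultimately show ?thesis by simp
qed

lemma dP_low: assumes i: "i \<in> {1,2}" and l: "l \<le> m" shows "low m (partial i (P m l))"
proof -
  have "low m (\<lambda>p. \<Sum>k\<le>m. \<Sum>l'\<le>k. Gc m k $$ (l,l') * dmon i k l' p)"
  proof (rule low_sum)
    fix k assume k: "k \<in> {..m}"
    show "low m (\<lambda>p. \<Sum>l'\<le>k. Gc m k $$ (l,l') * dmon i k l' p)"
    proof (rule low_sum)
      fix l' assume "l' \<in> {..k}"
      then have "low k (dmon i k l')" by (intro dmon_low[OF i]) simp
      then have "low m (dmon i k l')" by (rule low_mono) (use k in simp)
      then show "low m (\<lambda>p. Gc m k $$ (l,l') * dmon i k l' p)" by (rule low_scale)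
    qed simp
  qed simp
  then show ?thesis by (rule low_cong) (simp add: partial_P[OF i l])
qed

lemma dP_decomp: assumes i: "i \<in> {1,2}" and n: "3 \<le> n" and j: "j \<le> n"
  shows "partial i (P n j) p = vp (n-1) (\<lambda>k. B i n $$ (j,k)) p + vp (n-3) (\<lambda>k. C i n $$ (j,k)) p"
proof -
  have n1: "1 \<le> n" using n by simp
  have cB: "B i n \<in> carrier_mat (n+1) n" by (rule B_dim[OF i n1])
  have cC: "C i n \<in> carrier_mat (n+1) (n-2)" by (rule C_dim[OF i n1])
  have nn: "n - 1 + 1 = n" using n by simp
  have lt: "{..<n} = {..n-1}" using n by auto
  have "vec (n + 1) (\<lambda>j. partial i (P n j) p) $ j = (B i n *\<^sub>v polyvec Gc (n - 1) p +
        (if n < 3 then 0\<^sub>v (n + 1) else C i n *\<^sub>v polyvec Gc (n - 3) p)) $ j"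
    using BC_rel[OF i n1] by simp
  moreover have "(B i n *\<^sub>v polyvec Gc (n - 1) p +
        (if n < 3 then 0\<^sub>v (n + 1) else C i n *\<^sub>v polyvec Gc (n - 3) p)) $ j
       = (B i n *\<^sub>v polyvec Gc (n - 1) p) $ j + (C i n *\<^sub>v polyvec Gc (n - 3) p) $ j"
    using cC n j by (subst index_add_vec(1)) auto
  moreover have "(B i n *\<^sub>v polyvec Gc (n - 1) p) $ j = vp (n-1) (\<lambda>k. B i n $$ (j,k)) p"
  proof -
    have "(B i n *\<^sub>v polyvec Gc (n - 1) p) $ j = (\<Sum>k<n. B i n $$ (j,k) * polyvec Gc (n - 1) p $ k)"
      using cB j nn by (intro mat_vec_sum) auto
    also have "\<dots> = vp (n-1) (\<lambda>k. B i n $$ (j,k)) p"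
      unfolding vp_def lt using n by (intro sum.cong refl) simp
    finally show ?thesis .
  qed
  moreover have "(C i n *\<^sub>v polyvec Gc (n - 3) p) $ j = vp (n-3) (\<lambda>k. C i n $$ (j,k)) p"
  proof -
    have "(C i n *\<^sub>v polyvec Gc (n - 3) p) $ j = (\<Sum>k<n-2. C i n $$ (j,k) * polyvec Gc (n - 3) p $ k)"
      using cC j n by (intro mat_vec_sum) auto
    also have "\<dots> = vp (n-3) (\<lambda>k. C i n $$ (j,k)) p"
      unfolding vp_def using n by (intro sum.reindex_bij_witness[of _ id id]) auto
    finally show ?thesis .
  qed
  ultimately show ?thesis using j by simp
qed

lemma T1_int: assumes i: "i \<in> {1,2}" and j: "j \<le> m + 3" and l: "l \<le> m"
  shows "has_bochner_integral lborel (\<lambda>p. partial i (P (m+3) j) p * P m l p * W p) (C i (m+3) $$ (j,l))"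
proof -
  have "has_bochner_integral lborel (\<lambda>p. vp (m+2) (\<lambda>k. B i (m+3) $$ (j,k)) p * P m l p * W p
      + vp m (\<lambda>k. C i (m+3) $$ (j,k)) p * P m l p * W p) (0 + C i (m+3) $$ (j,l))"
    using vp_int[OF l, of "m+2" "\<lambda>k. B i (m+3) $$ (j,k)"] vp_int[OF l, of m "\<lambda>k. C i (m+3) $$ (j,k)"]
    by (intro has_bochner_integral_add) auto
  then have "has_bochner_integral lborel (\<lambda>p. vp (m+2) (\<lambda>k. B i (m+3) $$ (j,k)) p * P m l p * W p
      + vp m (\<lambda>k. C i (m+3) $$ (j,k)) p * P m l p * W p) (C i (m+3) $$ (j,l))" by (simp only: add_0_left)
  then show ?thesis
    by (rule hbi_eq) (simp add: dP_decomp[OF i _ j] algebra_simps)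
qed

lemma T2_int: assumes i: "i \<in> {1,2}" and j: "j \<le> m + 3" and l: "l \<le> m"
  shows "has_bochner_integral lborel (\<lambda>p. P (m+3) j p * partial i (P m l) p * W p) 0"
proof -
  have "low (m+3) (partial i (P m l))" using dP_low[OF i l] by (rule low_mono) simp
  from low_int[OF this j] show ?thesis by (rule hbi_eq) (simp add: mult_ac)
qed

lemma dq_mon: assumes l: "l' \<le> m"
  shows "dq i p * mon m l' p = (if i = 1 then 4*a40 * mon (m+3) l' p + 2*a22 * mon (m+3) (l'+2) p + 2*a20 * mon (m+1) l' p
     else 4*a04 * mon (m+3) (l'+3) p + 2*a22 * mon (m+3) (l'+1) p + 2*a02 * mon (m+1) (l'+1) p)"
proof -
  obtain d where m: "m = l' + d" using l le_iff_add by blast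
  have e: "m + 3 - l' = d + 3" "m + 3 - (l' + 2) = d + 1" "m + 1 - l' = d + 1" "m - l' = d"
     "m + 3 - (l' + 3) = d" "m + 3 - (l' + 1) = d + 2" "m + 1 - (l' + 1) = d" using m by auto
  show ?thesis
    unfolding mon_def dq_def e by (cases "i = 1") (simp_all add: power_add power2_eq_square power3_eq_cube algebra_simps)
qed

lemma dq_low: assumes R: "low m R" and i: "i \<in> {1,2}" shows "low (m+3) (\<lambda>p. dq i p * R p)"
proof -
  have c1: "\<And>f M. low M f \<Longrightarrow> low (Suc M) (\<lambda>p. coord 1 p * f p)" by (rule low_mul) simp
  have c2: "\<And>f M. low M f \<Longrightarrow> low (Suc M) (\<lambda>p. coord 2 p * f p)" by (rule low_mul) simp
  have x1: "low (m+3) (\<lambda>p. coord 1 p * R p)" using c1[OF R] by (rule low_mono) simp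
  have x2: "low (m+3) (\<lambda>p. coord 2 p * R p)" using c2[OF R] by (rule low_mono) simp
  show ?thesis
  proof (cases "i = 1")
    case True
    have "low (m+3) (\<lambda>p. 4*a40 * (coord 1 p * (coord 1 p * (coord 1 p * R p))) +
        2*a22 * (coord 1 p * (coord 2 p * (coord 2 p * R p))) + 2*a20 * (coord 1 p * R p))"
      using c1[OF c1[OF c1[OF R]]] c1[OF c2[OF c2[OF R]]] x1
      by (intro low_add low_scale) (simp_all add: numeral_3_eq_3)
    then show ?thesis by (rule low_cong) (simp add: True dq_def coord_def algebra_simps power2_eq_square power3_eq_cube)
  next
    case False
    have "low (m+3) (\<lambda>p. 4*a04 * (coord 2 p * (coord 2 p * (coord 2 p * R p))) +
        2*a22 * (coord 1 p * (coord 1 p * (coord 2 p * R p))) + 2*a02 * (coord 2 p * R p))"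
      using c2[OF c2[OF c2[OF R]]] c1[OF c1[OF c2[OF R]]] x2
      by (intro low_add low_scale) (simp_all add: numeral_3_eq_3)
    note lw = this
    have i2: "i = 2" using i False by simp
    show ?thesis using lw by (rule low_cong) (simp add: i2 dq_def coord_def algebra_simps power2_eq_square power3_eq_cube)
  qed
qed

definition KHv :: "nat \<Rightarrow> nat \<Rightarrow> nat \<Rightarrow> nat \<Rightarrow> real" where
  "KHv i m l' k = (if i = 1 then 4*a40 * minv (Gc (m+3) (m+3)) $$ (l',k) + 2*a22 * minv (Gc (m+3) (m+3)) $$ (l'+2,k)
     else 4*a04 * minv (Gc (m+3) (m+3)) $$ (l'+3,k) + 2*a22 * minv (Gc (m+3) (m+3)) $$ (l'+1,k))"

lemma dqmon_top: assumes i: "i \<in> {1,2}" and l: "l' \<le> m" shows "top (m+3) (\<lambda>p. dq i p * mon m l' p) (KHv i m l')"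
proof (cases "i = 1")
  case True
  have t: "top (m+3) (\<lambda>p. 4*a40 * mon (m+3) l' p + 2*a22 * mon (m+3) (l'+2) p)
     (\<lambda>k. 4*a40 * minv (Gc (m+3) (m+3)) $$ (l',k) + 2*a22 * minv (Gc (m+3) (m+3)) $$ (l'+2,k))"
    using l by (intro top_add top_scale mon_top) simp_all
  have lw: "low (m+3) (\<lambda>p. 2*a20 * mon (m+1) l' p)"
    using mon_low[of l' "m+1"] l by (intro low_scale) (auto elim: low_mono)
  show ?thesis using top_low[OF t lw]
    by (rule top_cong) (simp_all add: dq_mon[OF l] True KHv_def)
next
  case False
  have t: "top (m+3) (\<lambda>p. 4*a04 * mon (m+3) (l'+3) p + 2*a22 * mon (m+3) (l'+1) p)
     (\<lambda>k. 4*a04 * minv (Gc (m+3) (m+3)) $$ (l'+3,k) + 2*a22 * minv (Gc (m+3) (m+3)) $$ (l'+1,k))"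
    using l by (intro top_add top_scale mon_top) simp_all
  have lw: "low (m+3) (\<lambda>p. 2*a02 * mon (m+1) (l'+1) p)"
    using mon_low[of "l'+1" "m+1"] l by (intro low_scale) (auto elim: low_mono)
  have i2: "i = 2" using i False by simp
  show ?thesis using top_low[OF t lw]
    by (rule top_cong) (simp_all add: dq_mon[OF l] i2 KHv_def)
qed

lemma dqP_top: assumes i: "i \<in> {1,2}" and l: "l \<le> m"
  shows "top (m+3) (\<lambda>p. dq i p * P m l p) (\<lambda>k. \<Sum>l'\<le>m. Gc m m $$ (l,l') * KHv i m l' k)"
proof -
  obtain R where R: "low m R" "\<forall>p. P m l p = (\<Sum>l'\<le>m. Gc m m $$ (l,l') * mon m l' p) + R p"
    using P_split[OF l] by blast
  have ts: "top (m+3) (\<lambda>p. \<Sum>l'\<le>m. Gc m m $$ (l,l') * (dq i p * mon m l' p)) (\<lambda>k. \<Sum>l'\<le>m. Gc m m $$ (l,l') * KHv i m l' k)"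
  proof (rule top_sum)
    fix l' assume "l' \<in> {..m}"
    then have "top (m+3) (\<lambda>p. dq i p * mon m l' p) (KHv i m l')" by (intro dqmon_top[OF i]) simp
    then show "top (m+3) (\<lambda>p. Gc m m $$ (l,l') * (dq i p * mon m l' p)) (\<lambda>k. Gc m m $$ (l,l') * KHv i m l' k)"
      by (rule top_scale)
  qed simp
  have e: "(\<Sum>l'\<le>m. Gc m m $$ (l,l') * (dq i p * mon m l' p)) + dq i p * R p = dq i p * P m l p" for p
  proof -
    have "P m l p = (\<Sum>l'\<le>m. Gc m m $$ (l,l') * mon m l' p) + R p" using R(2) by blast
    then show ?thesis by (simp add: sum_distrib_left distrib_left mult_ac)
  qed
  show ?thesis using top_low[OF ts dq_low[OF R(1) i]] by (rule top_cong) (simp_all only: e)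
qed

lemma T3_int: assumes i: "i \<in> {1,2}" and j: "j \<le> m + 3" and l: "l \<le> m"
  shows "has_bochner_integral lborel (\<lambda>p. P (m+3) j p * P m l p * dq i p * W p) (\<Sum>l'\<le>m. Gc m m $$ (l,l') * KHv i m l' j)"
  using top_int[OF dqP_top[OF i l] j] by (rule hbi_eq) (simp add: mult_ac)

lemma C_entry: assumes i: "i \<in> {1,2}" and j: "j \<le> m + 3" and l: "l \<le> m"
  shows "C i (m+3) $$ (j,l) = (\<Sum>l'\<le>m. Gc m m $$ (l,l') * KHv i m l' j)"
proof -
  define h where "h p = P (m+3) j p * P m l p * W p" for p
  define h' where "h' p = partial i (P (m+3) j) p * P m l p * W p + P (m+3) j p * partial i (P m l) p * W p
      - P (m+3) j p * P m l p * dq i p * W p" for p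
  define V where "V = (\<Sum>l'\<le>m. Gc m m $$ (l,l') * KHv i m l' j)"
  have hb: "has_bochner_integral lborel h' (C i (m+3) $$ (j,l) + 0 - V)"
    unfolding h'_def[abs_def] V_def
    by (intro has_bochner_integral_diff has_bochner_integral_add T1_int[OF i j l] T2_int[OF i j l] T3_int[OF i j l])
  have ih: "integrable lborel h"
    unfolding h_def[abs_def] using ons_int[OF j l] by (rule integrable.intros)
  have ih': "integrable lborel h'" using hb by (rule integrable.intros)
  have d: "((\<lambda>u. h (p + u *\<^sub>R edir i)) has_real_derivative h' (p + t *\<^sub>R edir i)) (at t)" for p t
  proof -
    let ?q = "p + t *\<^sub>R edir i"
    have D: "((\<lambda>u. P (m+3) j (p + u *\<^sub>R edir i) * P m l (p + u *\<^sub>R edir i) * W (p + u *\<^sub>R edir i)) has_real_derivative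
        (partial i (P (m+3) j) ?q * P m l ?q + partial i (P m l) ?q * P (m+3) j ?q) * W ?q
        + (- dq i ?q * W ?q) * (P (m+3) j ?q * P m l ?q)) (at t)"
      by (intro DERIV_mult P_DERIV[OF i j] P_DERIV[OF i l] W_DERIV[OF i])
    moreover have "(partial i (P (m+3) j) ?q * P m l ?q + partial i (P m l) ?q * P (m+3) j ?q) * W ?q
        + (- dq i ?q * W ?q) * (P (m+3) j ?q * P m l ?q) = h' ?q"
      unfolding h'_def by (simp add: algebra_simps)
    ultimately show ?thesis unfolding h_def by simp
  qed
  have ch': "continuous_on UNIV h'"
    unfolding h'_def[abs_def]
    using cont_dP[OF i j] cont_dP[OF i l] cont_P[OF j] cont_P[OF l] cont_W cont_dq[of i]
    by (intro continuous_on_diff continuous_on_add continuous_on_mult) auto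
  have c: "continuous_on UNIV (\<lambda>t. h' (p + t *\<^sub>R edir i))" for p
  proof -
    have "continuous_on UNIV (\<lambda>t::real. p + t *\<^sub>R edir i)" by (intro continuous_intros)
    then show ?thesis by (rule continuous_on_compose2[OF ch']) auto
  qed
  have "integral\<^sup>L lborel h' = 0" by (rule ibp[OF ih ih' d c])
  moreover have "integral\<^sup>L lborel h' = C i (m+3) $$ (j,l) + 0 - V"
    using hb by (rule has_bochner_integral_integral_eq)
  ultimately show ?thesis unfolding V_def by simp
qed

end

lemma Kmat_carrier: "Kmat a b c i n \<in> carrier_mat (n+1) (n+1)"
  unfolding Kmat_def by (rule mat_carrier)

lemma K_mult: assumes Y: "Y \<in> carrier_mat (n+1) c" and r: "r \<le> n" and k: "k < c"
  shows "(Kmat a40 a22 a04 i n * Y) $$ (r,k) = (if i = 1 then 4*a40 * Y $$ (r,k) + (if r + 2 \<le> n then 2*a22 * Y $$ (r+2,k) else 0)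
      else 4*a04 * Y $$ (r,k) + (if 2 \<le> r then 2*a22 * Y $$ (r-2,k) else 0))"
proof -
  have "(Kmat a40 a22 a04 i n * Y) $$ (r,k) = (\<Sum>c<n+1. Kmat a40 a22 a04 i n $$ (r,c) * Y $$ (c,k))"
    using r k by (intro mat_mult_entry[OF Kmat_carrier Y]) auto
  also have "\<dots> = (\<Sum>c<n+1. (if i = 1 then (if c = r then 4*a40 * Y $$ (c,k) else 0) + (if c = r + 2 then 2*a22 * Y $$ (c,k) else 0)
      else (if c = r then 4*a04 * Y $$ (c,k) else 0) + (if c + 2 = r then 2*a22 * Y $$ (c,k) else 0)))"
  proof (intro sum.cong refl)
    fix c assume c: "c \<in> {..<n+1}"
    have "Kmat a40 a22 a04 i n $$ (r,c) = (if i = 1 then (if c = r then 4 * a40 else if c = r + 2 then 2 * a22 else 0)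
     else (if c = r then 4 * a04 else if r = c + 2 then 2 * a22 else 0))"
      unfolding Kmat_def using c r by (subst index_mat(1)) auto
    then show "Kmat a40 a22 a04 i n $$ (r,c) * Y $$ (c,k) = (if i = 1 then (if c = r then 4*a40 * Y $$ (c,k) else 0) + (if c = r + 2 then 2*a22 * Y $$ (c,k) else 0)
      else (if c = r then 4*a04 * Y $$ (c,k) else 0) + (if c + 2 = r then 2*a22 * Y $$ (c,k) else 0))"
      by auto
  qed
  also have "\<dots> = (if i = 1 then 4*a40 * Y $$ (r,k) + (if r + 2 \<le> n then 2*a22 * Y $$ (r+2,k) else 0)
      else 4*a04 * Y $$ (r,k) + (if 2 \<le> r then 2*a22 * Y $$ (r-2,k) else 0))"
  proof (cases "i = 1")
    case True
    have "(\<Sum>c<n+1. (if c = r then 4*a40 * Y $$ (c,k) else 0) + (if c = r + 2 then 2*a22 * Y $$ (c,k) else 0))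
       = 4*a40 * Y $$ (r,k) + (if r + 2 \<le> n then 2*a22 * Y $$ (r+2,k) else 0)"
      unfolding sum.distrib using r by (simp only: sum.delta finite_lessThan) auto
    then show ?thesis using True by simp
  next
    case False
    have e: "(\<lambda>c. if c + 2 = r then 2*a22 * Y $$ (c,k) else 0) = (\<lambda>c. if c = r - 2 \<and> 2 \<le> r then 2*a22 * Y $$ (c,k) else 0)"
      by (auto simp: fun_eq_iff)
    have "(\<Sum>c<n+1. (if c = r then 4*a04 * Y $$ (c,k) else 0) + (if c + 2 = r then 2*a22 * Y $$ (c,k) else 0))
       = 4*a04 * Y $$ (r,k) + (if 2 \<le> r then 2*a22 * Y $$ (r-2,k) else 0)"
      unfolding sum.distrib e using r by (cases "2 \<le> r") (simp_all only: sum.delta finite_lessThan, auto)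
    then show ?thesis using False by simp
  qed
  finally show ?thesis .
qed

context frs begin

lemma part3m: assumes i: "i \<in> {1,2}"
  shows "transpose_mat (C i (m+3)) =
      Gc m m * Lmat i m * Lmat i (m+1) * Lmat i (m+2) * Kmat a40 a22 a04 i (m+3) * minv (Gc (m+3) (m+3))"
proof -
  let ?G = "Gc m m" and ?L1 = "Lmat i m" and ?L2 = "Lmat i (m+1)" and ?L3 = "Lmat i (m+2)"
    and ?K = "Kmat a40 a22 a04 i (m+3)" and ?H = "minv (Gc (m+3) (m+3))"
  have cG: "?G \<in> carrier_mat (m+1) (m+1)" by (rule Gc_carrier) simp
  have cL1: "?L1 \<in> carrier_mat (m+1) (m+2)" by (rule Lmat_carrier)
  have cL2: "?L2 \<in> carrier_mat (m+2) (m+3)" using Lmat_carrier[of i "m+1"] by (simp add: eval_nat_numeral)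
  have cL3: "?L3 \<in> carrier_mat (m+3) (m+4)" using Lmat_carrier[of i "m+2"] by (simp add: eval_nat_numeral)
  have cK: "?K \<in> carrier_mat (m+4) (m+4)" using Kmat_carrier[of a40 a22 a04 i "m+3"] by (simp add: eval_nat_numeral)
  have cH: "?H \<in> carrier_mat (m+4) (m+4)" using Ginv(1)[of "m+3"] by (simp add: eval_nat_numeral)
  have cKH: "?K * ?H \<in> carrier_mat (m+4) (m+4)" using cK cH by (rule mult_carrier_mat)
  have c3: "?L3 * (?K * ?H) \<in> carrier_mat (m+3) (m+4)" using cL3 cKH by (rule mult_carrier_mat)
  have c2: "?L2 * (?L3 * (?K * ?H)) \<in> carrier_mat (m+2) (m+4)" using cL2 c3 by (rule mult_carrier_mat)
  have c1: "?L1 * (?L2 * (?L3 * (?K * ?H))) \<in> carrier_mat (m+1) (m+4)" using cL1 c2 by (rule mult_carrier_mat)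
  have c0: "?G * (?L1 * (?L2 * (?L3 * (?K * ?H)))) \<in> carrier_mat (m+1) (m+4)" using cG c1 by (rule mult_carrier_mat)
  have cGL1: "?G * ?L1 \<in> carrier_mat (m+1) (m+2)" using cG cL1 by (rule mult_carrier_mat)
  have cGL2: "?G * ?L1 * ?L2 \<in> carrier_mat (m+1) (m+3)" using cGL1 cL2 by (rule mult_carrier_mat)
  have cGL3: "?G * ?L1 * ?L2 * ?L3 \<in> carrier_mat (m+1) (m+4)" using cGL2 cL3 by (rule mult_carrier_mat)
  have cGL3K: "?G * ?L1 * ?L2 * ?L3 * ?K \<in> carrier_mat (m+1) (m+4)" using cGL3 cK by (rule mult_carrier_mat)
  have e: "?G * ?L1 * ?L2 * ?L3 * ?K * ?H = ?G * (?L1 * (?L2 * (?L3 * (?K * ?H))))"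
  proof -
    have "?G * ?L1 * ?L2 * ?L3 * ?K * ?H = (?G * ?L1 * ?L2 * ?L3) * (?K * ?H)"
      using cGL3 cK cH by (rule assoc_mult_mat)
    also have "\<dots> = (?G * ?L1 * ?L2) * (?L3 * (?K * ?H))" using cGL2 cL3 cKH by (rule assoc_mult_mat)
    also have "\<dots> = (?G * ?L1) * (?L2 * (?L3 * (?K * ?H)))" using cGL1 cL2 c3 by (rule assoc_mult_mat)
    also have "\<dots> = ?G * (?L1 * (?L2 * (?L3 * (?K * ?H))))" using cG cL1 c2 by (rule assoc_mult_mat)
    finally show ?thesis .
  qed
  have cC: "C i (m+3) \<in> carrier_mat (m+4) (m+1)" using C_dim[OF i, of "m+3"] by (simp add: eval_nat_numeral)
  have cCT: "transpose_mat (C i (m+3)) \<in> carrier_mat (m+1) (m+4)" using cC by simp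
  show ?thesis unfolding e
  proof (rule eq_matI)
    fix l k assume lk: "l < dim_row (?G * (?L1 * (?L2 * (?L3 * (?K * ?H)))))" "k < dim_col (?G * (?L1 * (?L2 * (?L3 * (?K * ?H)))))"
    then have l: "l \<le> m" and k: "k \<le> m + 3" using c0 by auto
    have lt: "{..<m+1} = {..m}" by auto
    have "(?G * (?L1 * (?L2 * (?L3 * (?K * ?H))))) $$ (l,k) = (\<Sum>l'<m+1. ?G $$ (l,l') * (?L1 * (?L2 * (?L3 * (?K * ?H)))) $$ (l',k))"
      using l k by (intro mat_mult_entry[OF cG c1]) auto
    also have "\<dots> = (\<Sum>l'\<le>m. ?G $$ (l,l') * KHv i m l' k)"
      unfolding lt
    proof (intro sum.cong refl)
      fix l' assume l': "l' \<in> {..m}"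
      have s1: "sh i l' \<le> m + 1" "sh i (sh i l') \<le> m + 2" "sh i (sh i (sh i l')) \<le> m + 3"
        using l' by (auto simp: sh_def)
      have "(?L1 * (?L2 * (?L3 * (?K * ?H)))) $$ (l',k) = (?L2 * (?L3 * (?K * ?H))) $$ (sh i l', k)"
        using c2 l' k by (intro Lmat_mult[where c="m+4"]) (auto simp: eval_nat_numeral)
      also have "\<dots> = (?L3 * (?K * ?H)) $$ (sh i (sh i l'), k)"
        using c3 s1 k by (intro Lmat_mult[where c="m+4"]) (auto simp: eval_nat_numeral)
      also have "\<dots> = (?K * ?H) $$ (sh i (sh i (sh i l')), k)"
        using cKH s1 k by (intro Lmat_mult[where c="m+4"]) (auto simp: eval_nat_numeral)
      also have "\<dots> = KHv i m l' k"
      proof -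
        have cH': "?H \<in> carrier_mat (m+3+1) (m+4)" using cH by (simp add: eval_nat_numeral)
        have "(?K * ?H) $$ (sh i (sh i (sh i l')), k) = (if i = 1 then 4*a40 * ?H $$ (sh i (sh i (sh i l')),k) + (if sh i (sh i (sh i l')) + 2 \<le> m+3 then 2*a22 * ?H $$ (sh i (sh i (sh i l'))+2,k) else 0)
          else 4*a04 * ?H $$ (sh i (sh i (sh i l')),k) + (if 2 \<le> sh i (sh i (sh i l')) then 2*a22 * ?H $$ (sh i (sh i (sh i l'))-2,k) else 0))"
          using s1 k by (intro K_mult[OF cH']) auto
        also have "\<dots> = KHv i m l' k"
        proof (cases "i = 1")
          case True then show ?thesis using l' by (simp add: KHv_def sh_def)
        next
          case False
          then have i2: "i = 2" using i by simp
          have "l' + 1 + 1 + 1 - 2 = l' + 1" by simp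
          then show ?thesis using i2 by (simp add: KHv_def sh_def eval_nat_numeral)
        qed
        finally show ?thesis .
      qed
      finally show "?G $$ (l,l') * (?L1 * (?L2 * (?L3 * (?K * ?H)))) $$ (l',k) = ?G $$ (l,l') * KHv i m l' k" by simp
    qed
    also have "\<dots> = C i (m+3) $$ (k,l)" using C_entry[OF i k l] by simp
    also have "\<dots> = transpose_mat (C i (m+3)) $$ (l,k)" using cC l k by simp
    finally show "transpose_mat (C i (m+3)) $$ (l,k) = (?G * (?L1 * (?L2 * (?L3 * (?K * ?H))))) $$ (l,k)" by simp
  next
    show "dim_row (transpose_mat (C i (m+3))) = dim_row (?G * (?L1 * (?L2 * (?L3 * (?K * ?H)))))"
      using carrier_matD[OF cCT] carrier_matD[OF c0] by simp
    show "dim_col (transpose_mat (C i (m+3))) = dim_col (?G * (?L1 * (?L2 * (?L3 * (?K * ?H)))))"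
      using carrier_matD[OF cCT] carrier_matD[OF c0] by simp
  qed
qed

lemma part3: assumes i: "i \<in> {1,2}" and n: "n \<ge> 3"
  shows "transpose_mat (C i n) =
         Gc (n - 3) (n - 3) * Lmat i (n - 3) * Lmat i (n - 2) * Lmat i (n - 1)
           * Kmat a40 a22 a04 i n * minv (Gc n n)"
proof -
  obtain m where m: "n = m + 3" using n by (metis add.commute le_Suc_ex)
  have e: "n - 3 = m" "n - 2 = m + 1" "n - 1 = m + 2" using m by auto
  show ?thesis unfolding e unfolding m by (rule part3m[OF i])
qed

end

theorem proposition4p2:
  fixes a40 a22 a04 a20 a02 :: real
    and Gc :: "nat \<Rightarrow> nat \<Rightarrow> real mat"
    and A B :: "nat \<Rightarrow> nat \<Rightarrow> real mat"
    and C :: "nat \<Rightarrow> nat \<Rightarrow> real mat"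
  assumes "a40 \<ge> 0" "a22 \<ge> 0" "a04 \<ge> 0" "a40 + a22 > 0" "a22 + a04 > 0"
    and ons: "orthonormal_system (freud_W a40 a22 a04 a20 a02) Gc"
    and A_dim: "\<And>i n. i \<in> {1, 2} \<Longrightarrow> A i n \<in> carrier_mat (n + 1) (n + 2)"
    and A_rec: "\<And>i n p. i \<in> {1, 2} \<Longrightarrow>
        vec (n + 1) (\<lambda>j. coord i p * polyP Gc n j p) =
        A i n *\<^sub>v polyvec Gc (n + 1) p +
        (if n = 0 then 0\<^sub>v (n + 1) else transpose_mat (A i (n - 1)) *\<^sub>v polyvec Gc (n - 1) p)"
    and B_dim: "\<And>i n. i \<in> {1, 2} \<Longrightarrow> n \<ge> 1 \<Longrightarrow> B i n \<in> carrier_mat (n + 1) n"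
    and C_dim: "\<And>i n. i \<in> {1, 2} \<Longrightarrow> n \<ge> 1 \<Longrightarrow> C i n \<in> carrier_mat (n + 1) (n - 2)"
    and BC_rel: "\<And>i n p. i \<in> {1, 2} \<Longrightarrow> n \<ge> 1 \<Longrightarrow>
        vec (n + 1) (\<lambda>j. partial i (polyP Gc n j) p) =
        B i n *\<^sub>v polyvec Gc (n - 1) p +
        (if n < 3 then 0\<^sub>v (n + 1) else C i n *\<^sub>v polyvec Gc (n - 3) p)"
  shows "\<forall>i \<in> {1, 2}.
      (\<forall>n. A i n = Gc n n * Lmat i n * minv (Gc (n + 1) (n + 1))) \<and>
      (\<forall>n \<ge> 1. B i n = Gc n n * transpose_mat (Lmat i (n - 1)) * Nmat i n * minv (Gc (n - 1) (n - 1))) \<and>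
      (\<forall>n \<ge> 3. transpose_mat (C i n) =
         Gc (n - 3) (n - 3) * Lmat i (n - 3) * Lmat i (n - 2) * Lmat i (n - 1)
           * Kmat a40 a22 a04 i n * minv (Gc n n)) \<and>
      (\<forall>n. A i n * (Gc (n + 1) (n + 1) * transpose_mat (Lmat i n) * minv (Gc n n)) = 1\<^sub>m (n + 1))"
  proof -
  interpret frs a40 a22 a04 a20 a02 Gc A B C
    by (rule frs.intro[OF ons A_dim A_rec B_dim C_dim BC_rel])
  show ?thesis
  proof (intro ballI conjI allI impI)
    fix i n :: nat assume i: "i \<in> {1, 2}"
    show "A i n = Gc n n * Lmat i n * minv (Gc (n + 1) (n + 1))" by (rule part1[OF i])
  next
    fix i n :: nat assume i: "i \<in> {1, 2}" and n: "1 \<le> n"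
    show "B i n = Gc n n * transpose_mat (Lmat i (n - 1)) * Nmat i n * minv (Gc (n - 1) (n - 1))"
      by (rule part2[OF i n])
  next
    fix i n :: nat assume i: "i \<in> {1, 2}" and n: "3 \<le> n"
    show "transpose_mat (C i n) =
         Gc (n - 3) (n - 3) * Lmat i (n - 3) * Lmat i (n - 2) * Lmat i (n - 1)
           * Kmat a40 a22 a04 i n * minv (Gc n n)"
      by (rule part3[OF i n])
  next
    fix i n :: nat assume i: "i \<in> {1, 2}"
    show "A i n * (Gc (n + 1) (n + 1) * transpose_mat (Lmat i n) * minv (Gc n n)) = 1\<^sub>m (n + 1)"
      by (rule part4[OF i])
  qed
qed

end
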